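(* Let $\lambda\in\mathbb{C}^n$. The superspace $M(\lambda)$ is a $\mathfrak{gl}(m,n)$-module, where $\mathfrak{gl}(m,n)_0=\mathfrak{gl}_m\oplus\mathfrak{gl}_n$ acts by the tensor product action and the odd part acts by $$E_{i,m+j}\cdot e_{i_1}\wedge\dots\wedge e_{i_r}y(\lambda')=(-1)^r\lambda'_j\,e_i\wedge e_{i_1}\wedge\dots\wedge e_{i_r}y(\lambda'-e_j),$$ $$E_{m+j,i}\cdot e_{i_1}\wedge\dots\wedge e_{i_r}y(\lambda')=\begin{cases}0,& i\notin\{i_1,\dots,i_r\},\\ (-1)^{r-s}e_{i_1}\wedge\dots\wedge\widehat{e_{i_s}}\wedge\dots\wedge e_{i_r}y(\lambda'+e_j),& i=i_s,\end{cases}$$ for all $i\in\{1,\dots,m\}$, $j\in\{1,\dots,n\}$ and nonzero $e_{i_1}\wedge\dots\wedge e_{i_r}y(\lambda')\in M(\lambda)$.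
   Context: $\mathfrak{gl}(m,n)$ has basis of matrix units $E_{a,b}$, $1\le a,b\le m+n$; even part $\mathfrak{gl}(m,n)_0$ spanned by $E_{a,b}$ with $a,b\le m$ or $a,b>m$, odd part by $E_{i,m+j},E_{m+j,i}$ ($i\le m$, $j\le n$); $\mathfrak{gl}(m,n)_0=\mathfrak{gl}_m\oplus\mathfrak{gl}_n$, with $\mathfrak{gl}_m=\mathrm{span}\{E_{i,k}:i,k\le m\}$ and $\mathfrak{gl}_n$ identified with $\mathrm{span}\{E_{m+l,m+j}\}$ via $E_{l,j}\mapsto E_{m+l,m+j}$. Modules are $\mathbb{Z}_2$-graded. $\Lambda(\mathbb{C}^m)=\bigoplus_{r=0}^m\Lambda^r(\mathbb{C}^m)$ with $e_1,\dots,e_m$ the standard basis of $\mathbb{C}^m$ and $\mathfrak{gl}_m$ acting naturally ($E_{i,k}e_s=\delta_{k,s}e_i$, extended as a derivation of $\wedge$; trivially on $\Lambda^0=\mathbb{C}$). For $\lambda\in\mathbb{C}^n$: $e_1,\dots,e_n$ also denotes the standard basis of $\mathbb{Z}^n$, $|\mu|=\sum_j\mu_j$; $S(\lambda)=X_1\times\dots\times X_n$ with $X_j=\lambda_j+\mathbb{Z}$ if $\lambda_j\notin\mathbb{Z}$, $X_j=\mathbb{Z}_{\ge0}$ if $\lambda_j\in\mathbb{Z}_{\ge0}$, $X_j=\{-1,-2,\dots\}$ if $\lambda_j\in\{-1,-2,\dots\}$; $W(\lambda)$ has basis $\{y(\lambda'):\lambda'\in S(\lambda)\}$, with $y(\mu)=0$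 for $\mu\notin S(\lambda)$, and $\mathfrak{gl}_n$ acts by $E_{l,j}y(\lambda')=\lambda'_jy(\lambda'-e_j+e_l)$. $M(\lambda)=\Lambda(\mathbb{C}^m)\otimes W(\lambda)$ (as a $\mathfrak{gl}_m\oplus\mathfrak{gl}_n$-module), spanned by elements $e_{i_1}\wedge\dots\wedge e_{i_r}y(\lambda')$ ($\otimes$ omitted; $r=0$ gives $y(\lambda')$), with $\mathbb{Z}_2$-grading: $M(\lambda)_{\bar i}$ is spanned by those $e_{i_1}\wedge\dots\wedge e_{i_r}y(\lambda')$ with $|\lambda-\lambda'|\equiv i\pmod 2$. *)

theory Defs
  imports Complex_Main
begin

(* Basis of M(lambda): pairs (S, mu) where S \<subseteq> {1..m} encodes the sorted wedge
   e_{i_1} \<and> ... \<and> e_{i_r} (i_1 < ... < i_r, S = {i_1,...,i_r}) and mu \<in> S(lambda).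
   Vectors of C^n / Z^n are functions nat \<Rightarrow> complex indexed by 1..n. *)
type_synonym mbasis = "nat set \<times> (nat \<Rightarrow> complex)"
type_synonym mvec = "mbasis \<Rightarrow> complex"

(* mu \<in> S(lambda); coordinates outside 1..n are normalised to 0 *)
definition inSl :: "nat \<Rightarrow> (nat \<Rightarrow> complex) \<Rightarrow> (nat \<Rightarrow> complex) \<Rightarrow> bool" where
  "inSl n lam mu \<longleftrightarrow> (\<forall>j. j \<notin> {1..n} \<longrightarrow> mu j = 0) \<and>
     (\<forall>j\<in>{1..n}.
        (lam j \<notin> \<int> \<longrightarrow> mu j - lam j \<in> \<int>) \<and>
        (lam j \<in> \<nat> \<longrightarrow> mu j \<in> \<nat>) \<and>
        (lam j \<in> \<int> \<and> lam j \<notin> \<nat> \<longrightarrow> - mu j \<in> \<nat> \<and> mu j \<noteq> 0))"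

definition Mbasis :: "nat \<Rightarrow> nat \<Rightarrow> (nat \<Rightarrow> complex) \<Rightarrow> mbasis set" where
  "Mbasis m n lam = {(S, mu). S \<subseteq> {1..m} \<and> inSl n lam mu}"

definition Mspace :: "nat \<Rightarrow> nat \<Rightarrow> (nat \<Rightarrow> complex) \<Rightarrow> mvec set" where
  "Mspace m n lam = {v. finite {b. v b \<noteq> 0} \<and> (\<forall>b. v b \<noteq> 0 \<longrightarrow> b \<in> Mbasis m n lam)}"

definition inversions :: "nat list \<Rightarrow> nat" where
  "inversions xs = card {(p, q). p < q \<and> q < length xs \<and> xs ! q < xs ! p}"

(* the element e_{x_1} \<and> ... \<and> e_{x_r} y(mu) of M(lambda) for an arbitrary list xs
   (zero if xs has repetitions, or mu \<notin> S(lambda)) *)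
definition gen :: "nat \<Rightarrow> nat \<Rightarrow> (nat \<Rightarrow> complex) \<Rightarrow> nat list \<Rightarrow> (nat \<Rightarrow> complex) \<Rightarrow> mvec" where
  "gen m n lam xs mu =
     (if distinct xs \<and> set xs \<subseteq> {1..m} \<and> inSl n lam mu
      then (\<lambda>b. if b = (set xs, mu) then (-1) ^ inversions xs else 0)
      else (\<lambda>_. 0))"

definition shift :: "(nat \<Rightarrow> complex) \<Rightarrow> nat \<Rightarrow> complex \<Rightarrow> (nat \<Rightarrow> complex)" where
  "shift mu j d = mu(j := mu j + d)"

definition basis_act :: "nat \<Rightarrow> nat \<Rightarrow> (nat \<Rightarrow> complex) \<Rightarrow> nat \<Rightarrow> nat \<Rightarrow> mbasis \<Rightarrow> mvec" where
  "basis_act m n lam a b c =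
     (let xs = sorted_list_of_set (fst c); mu = snd c; r = length xs in
      if a \<le> m \<and> b \<le> m then
        (\<lambda>d. \<Sum>s<r. if xs ! s = b then gen m n lam (xs[s := a]) mu d else 0)
      else if m < a \<and> m < b then
        (\<lambda>d. mu (b - m) * gen m n lam xs (shift (shift mu (b - m) (-1)) (a - m) 1) d)
      else if a \<le> m then
        (\<lambda>d. (-1) ^ r * mu (b - m) * gen m n lam (a # xs) (shift mu (b - m) (-1)) d)
      else
        (\<lambda>d. \<Sum>p<r. if xs ! p = b then
               (-1) ^ (r - Suc p) * gen m n lam (take p xs @ drop (Suc p) xs) (shift mu (a - m) 1) d
             else 0))"

definition actM :: "nat \<Rightarrow> nat \<Rightarrow> (nat \<Rightarrow> complex) \<Rightarrow> nat \<Rightarrow> nat \<Rightarrow> mvec \<Rightarrow> mvec" where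
  "actM m n lam a b v = (\<lambda>d. \<Sum>c\<in>{c. v c \<noteq> 0}. v c * basis_act m n lam a b c d)"

definition glmn :: "nat \<Rightarrow> nat \<Rightarrow> (nat \<Rightarrow> nat \<Rightarrow> complex) set" where
  "glmn m n = {X. \<forall>a b. X a b \<noteq> 0 \<longrightarrow> a \<in> {1..m+n} \<and> b \<in> {1..m+n}}"

definition Eunit :: "nat \<Rightarrow> nat \<Rightarrow> (nat \<Rightarrow> nat \<Rightarrow> complex)" where
  "Eunit a b = (\<lambda>c d. if c = a \<and> d = b then 1 else 0)"

(* parity of an index: True = odd block *)
definition par :: "nat \<Rightarrow> nat \<Rightarrow> bool" where
  "par m a \<longleftrightarrow> m < a"

definition homog :: "nat \<Rightarrow> (nat \<Rightarrow> nat \<Rightarrow> complex) \<Rightarrow> bool \<Rightarrow> bool" where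
  "homog m X p \<longleftrightarrow> (\<forall>a b. X a b \<noteq> 0 \<longrightarrow> (par m a \<noteq> par m b) = p)"

definition mmul :: "nat \<Rightarrow> (nat \<Rightarrow> nat \<Rightarrow> complex) \<Rightarrow> (nat \<Rightarrow> nat \<Rightarrow> complex) \<Rightarrow> (nat \<Rightarrow> nat \<Rightarrow> complex)" where
  "mmul N X Y = (\<lambda>a c. \<Sum>b\<in>{1..N}. X a b * Y b c)"

definition psign :: "bool \<Rightarrow> bool \<Rightarrow> complex" where
  "psign p q = (if p \<and> q then -1 else 1)"

definition sbracket :: "nat \<Rightarrow> bool \<Rightarrow> bool \<Rightarrow> (nat \<Rightarrow> nat \<Rightarrow> complex) \<Rightarrow> (nat \<Rightarrow> nat \<Rightarrow> complex) \<Rightarrow> (nat \<Rightarrow> nat \<Rightarrow> complex)" where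
  "sbracket N p q X Y = (\<lambda>a c. mmul N X Y a c - psign p q * mmul N Y X a c)"

definition rho :: "nat \<Rightarrow> nat \<Rightarrow> (nat \<Rightarrow> complex) \<Rightarrow> (nat \<Rightarrow> nat \<Rightarrow> complex) \<Rightarrow> mvec \<Rightarrow> mvec" where
  "rho m n lam X v = (\<lambda>d. \<Sum>a\<in>{1..m+n}. \<Sum>b\<in>{1..m+n}. X a b * actM m n lam a b v d)"

definition Mhom :: "nat \<Rightarrow> (nat \<Rightarrow> complex) \<Rightarrow> mvec \<Rightarrow> bool \<Rightarrow> bool" where
  "Mhom n lam v p \<longleftrightarrow> (\<forall>b. v b \<noteq> 0 \<longrightarrow>
      (\<exists>k::int. (\<Sum>j=1..n. lam j - snd b j) = of_int k \<and> odd k = p))"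

end

theory Submission
  imports Defs
begin


lemma inv_Cons: "inversions (x#xs) = length (filter (\<lambda>y. y < x) xs) + inversions xs"
proof -
  let ?A = "(\<lambda>q. (0::nat, Suc q)) ` {q. q < length xs \<and> xs!q < x}"
  let ?P = "{(p, q). p < q \<and> q < length xs \<and> xs ! q < xs ! p}"
  let ?B = "(\<lambda>(p,q). (Suc p, Suc q)) ` ?P"
  have eq: "{(p, q). p < q \<and> q < length (x#xs) \<and> (x#xs) ! q < (x#xs) ! p} = ?A \<union> ?B"
  proof (rule set_eqI, clarify)
    fix p q
    show "((p, q) \<in> {(p, q). p < q \<and> q < length (x#xs) \<and> (x#xs) ! q < (x#xs) ! p}) = ((p, q) \<in> ?A \<union> ?B)"
      by (cases p; cases q) (auto simp: image_iff)
  qed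
  have finP: "finite ?P"
    by (rule finite_subset[of _ "{..<length xs} \<times> {..<length xs}"]) auto
  have "card (?A \<union> ?B) = card ?A + card ?B"
    by (rule card_Un_disjoint) (use finP in auto)
  moreover have "card ?A = card {q. q < length xs \<and> xs!q < x}"
    by (rule card_image) (auto simp: inj_on_def)
  moreover have "card ?B = card ?P"
    by (rule card_image) (auto simp: inj_on_def)
  ultimately show ?thesis
    unfolding inversions_def eq by (simp add: length_filter_conv_card)
qed

lemma inv_Nil: "inversions [] = 0"
  by (simp add: inversions_def)

definition cross :: "nat list \<Rightarrow> nat list \<Rightarrow> nat" where
  "cross as bs = sum_list (map (\<lambda>a. length (filter (\<lambda>b. b < a) bs)) as)"

lemma inv_append: "inversions (as @ bs) = inversions as + inversions bs + cross as bs"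
  by (induction as) (auto simp: inv_Cons inv_Nil cross_def)

lemma cross_Cons2: "cross as (x # bs) = cross as bs + length (filter (\<lambda>a. x < a) as)"
  by (induction as) (auto simp: cross_def)

lemma filt_compl: "(x::nat) \<notin> set bs \<Longrightarrow> length (filter (\<lambda>b. b < x) bs) + length (filter (\<lambda>b. x < b) bs) = length bs"
proof (induction bs)
  case (Cons a bs)
  then show ?case by (cases "a < x") auto
qed simp

definition sgl :: "nat \<Rightarrow> nat list \<Rightarrow> complex" where
  "sgl x ys = (-1) ^ length (filter (\<lambda>y. x < y) ys)"

lemma inv_mid_nat: "(x::nat) \<notin> set bs \<Longrightarrow>
  inversions (as @ x # bs) + 2 * length (filter (\<lambda>b. x < b) bs) =
  inversions (as @ bs) + length bs + length (filter (\<lambda>y. x < y) (as @ bs))"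
proof -
  assume h: "x \<notin> set bs"
  have "inversions (as @ x # bs) = inversions as + inversions (x # bs) + cross as (x # bs)"
    by (rule inv_append)
  moreover have "inversions (as @ bs) = inversions as + inversions bs + cross as bs"
    by (rule inv_append)
  ultimately show ?thesis using filt_compl[OF h] by (simp add: inv_Cons cross_Cons2)
qed

lemma inv_mid: "x \<notin> set bs \<Longrightarrow>
  (-1::complex) ^ inversions (as @ x # bs) = (-1) ^ (inversions (as @ bs) + length bs) * sgl x (as @ bs)"
proof -
  assume "x \<notin> set bs"
  note e = inv_mid_nat[OF this, of as]
  have "(-1::complex) ^ (inversions (as @ x # bs) + 2 * length (filter (\<lambda>b. x < b) bs)) =
      (-1) ^ (inversions (as @ bs) + length bs + length (filter (\<lambda>y. x < y) (as @ bs)))" by (simp only: e)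
  then show ?thesis by (simp add: power_add power_mult sgl_def)
qed

lemma inv_sorted: "sorted xs \<Longrightarrow> distinct xs \<Longrightarrow> inversions xs = 0"
proof (induction xs)
  case Nil then show ?case by (simp add: inv_Nil)
next
  case (Cons x xs)
  have "filter (\<lambda>y. y < x) xs = []" using Cons.prems by (auto simp: filter_empty_conv)
  then show ?case using Cons by (simp add: inv_Cons)
qed

lemma sgl_set: "distinct ys \<Longrightarrow> sgl x ys = (-1) ^ card {y \<in> set ys. x < y}"
  by (simp add: sgl_def distinct_length_filter Int_commute Collect_conj_eq)



lemma inSl_coord:
  assumes "inSl n lam a" "inSl n lam b" "\<And>j. c j = a j \<or> c j = b j"
  shows "inSl n lam c"
  using assms unfolding inSl_def by metis

lemma nat_dec: "(z::complex) \<in> \<nat> \<Longrightarrow> z \<noteq> 0 \<Longrightarrow> z - 1 \<in> \<nat>"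
proof -
  assume a: "z \<in> \<nat>" "z \<noteq> 0"
  then obtain k where k: "z = of_nat k" by (auto elim: Nats_cases)
  then have "k \<ge> 1" using a by (cases k) auto
  then have "z - 1 = of_nat (k - 1)" using k by (simp add: of_nat_diff)
  then show ?thesis by simp
qed

lemma inSl_dec:
  assumes "inSl n lam mu" "mu j \<noteq> 0" "j \<in> {1..n}"
  shows "inSl n lam (shift mu j (-1))"
proof -
  have a: "(lam j \<notin> \<int> \<longrightarrow> mu j - lam j \<in> \<int>) \<and> (lam j \<in> \<nat> \<longrightarrow> mu j \<in> \<nat>) \<and>
        (lam j \<in> \<int> \<and> lam j \<notin> \<nat> \<longrightarrow> - mu j \<in> \<nat> \<and> mu j \<noteq> 0)"
    using assms unfolding inSl_def by blast
  have "(lam j \<notin> \<int> \<longrightarrow> (mu j - 1) - lam j \<in> \<int>) \<and> (lam j \<in> \<nat> \<longrightarrow> mu j - 1 \<in> \<nat>) \<and>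
        (lam j \<in> \<int> \<and> lam j \<notin> \<nat> \<longrightarrow> - (mu j - 1) \<in> \<nat> \<and> mu j - 1 \<noteq> 0)"
  proof (intro conjI impI)
    assume "lam j \<notin> \<int>" then show "(mu j - 1) - lam j \<in> \<int>"
      using a by (metis Ints_1 Ints_diff diff_right_commute)
  next
    assume "lam j \<in> \<nat>" then show "mu j - 1 \<in> \<nat>" using a assms(2) nat_dec by blast
  next
    assume h: "lam j \<in> \<int> \<and> lam j \<notin> \<nat>"
    then have "- mu j \<in> \<nat>" using a by blast
    moreover have "- (mu j - 1) = - mu j + 1" by simp
    ultimately show "- (mu j - 1) \<in> \<nat>" by (metis Nats_1 Nats_add)
  next
    assume h: "lam j \<in> \<int> \<and> lam j \<notin> \<nat>"
    then have "- mu j \<in> \<nat>" using a by blast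
    then obtain k where "- mu j = of_nat k" by (auto elim: Nats_cases)
    then have "mu j = - of_nat k" by (metis minus_minus)
    then show "mu j - 1 \<noteq> 0" by (auto simp: complex_eq_iff)
  qed
  then show ?thesis using assms unfolding inSl_def shift_def by auto
qed

lemma inSl_inc:
  assumes "inSl n lam mu" "mu j + 1 \<noteq> 0" "j \<in> {1..n}"
  shows "inSl n lam (shift mu j 1)"
proof -
  have a: "(lam j \<notin> \<int> \<longrightarrow> mu j - lam j \<in> \<int>) \<and> (lam j \<in> \<nat> \<longrightarrow> mu j \<in> \<nat>) \<and>
        (lam j \<in> \<int> \<and> lam j \<notin> \<nat> \<longrightarrow> - mu j \<in> \<nat> \<and> mu j \<noteq> 0)"
    using assms unfolding inSl_def by blast
  have "(lam j \<notin> \<int> \<longrightarrow> (mu j + 1) - lam j \<in> \<int>) \<and> (lam j \<in> \<nat> \<longrightarrow> mu j + 1 \<in> \<nat>) \<and>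
        (lam j \<in> \<int> \<and> lam j \<notin> \<nat> \<longrightarrow> - (mu j + 1) \<in> \<nat> \<and> mu j + 1 \<noteq> 0)"
  proof (intro conjI impI)
    assume "lam j \<notin> \<int>" then show "(mu j + 1) - lam j \<in> \<int>"
      using a by (metis Ints_1 Ints_add add_diff_eq diff_add_eq)
  next
    assume "lam j \<in> \<nat>" then show "mu j + 1 \<in> \<nat>" using a by (simp add: Nats_add)
  next
    assume h: "lam j \<in> \<int> \<and> lam j \<notin> \<nat>"
    then have "- mu j \<in> \<nat>" using a by blast
    then obtain k where k: "- mu j = of_nat k" by (auto elim: Nats_cases)
    then have "mu j = - of_nat k" by (metis minus_minus)
    then have "k \<noteq> 1" using assms(2) by auto
    moreover have "k \<noteq> 0"
    proof
      assume "k = 0" then have "mu j = 0" using k by (metis minus_equation_iff minus_zero of_nat_0)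
      then show False using a h by blast
    qed
    ultimately show "- (mu j + 1) \<in> \<nat>" using k
      by (cases k) (auto simp: of_nat_diff)
  next
    show "mu j + 1 \<noteq> 0" by fact
  qed
  then show ?thesis using assms unfolding inSl_def shift_def by auto
qed



definition sg1 :: "nat set \<Rightarrow> nat \<Rightarrow> complex" where
  "sg1 U i = (-1) ^ card {x\<in>U. i < x}"

lemma sg1_insert: "finite U \<Longrightarrow> x \<notin> U \<Longrightarrow> sg1 (insert x U) i = (if i < x then -1 else 1) * sg1 U i"
proof -
  assume f: "finite U" and x: "x \<notin> U"
  show ?thesis
  proof (cases "i < x")
    case True
    then have "{y\<in>insert x U. i < y} = insert x {y\<in>U. i < y}" by auto
    then show ?thesis using True f x by (simp add: sg1_def)
  next
    case False
    then have "{y\<in>insert x U. i < y} = {y\<in>U. i < y}" by auto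
    then show ?thesis using False by (simp add: sg1_def)
  qed
qed

lemma sg1_sq[simp]: "sg1 U i * sg1 U i = 1"
  by (simp add: sg1_def power_mult_distrib[symmetric])

definition Zo :: "nat \<Rightarrow> mvec \<Rightarrow> mvec" where
  "Zo i v = (\<lambda>(T,\<nu>). if i \<in> T \<and> finite T then sg1 (T - {i}) i * v (T - {i}, \<nu>) else 0)"
definition Po :: "nat \<Rightarrow> mvec \<Rightarrow> mvec" where
  "Po k v = (\<lambda>(T,\<nu>). if k \<notin> T \<and> finite T then sg1 T k * v (insert k T, \<nu>) else 0)"
definition Ze :: "nat \<Rightarrow> (nat \<Rightarrow> complex) \<Rightarrow> nat \<Rightarrow> mvec \<Rightarrow> mvec" where
  "Ze n lam j v = (\<lambda>(T,\<nu>). if inSl n lam \<nu> then v (T, shift \<nu> j (-1)) else 0)"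
definition Pe :: "nat \<Rightarrow> (nat \<Rightarrow> complex) \<Rightarrow> nat \<Rightarrow> mvec \<Rightarrow> mvec" where
  "Pe n lam j v = (\<lambda>(T,\<nu>). if inSl n lam \<nu> then (\<nu> j + 1) * v (T, shift \<nu> j 1) else 0)"

lemma Zo_app: "Zo i v (T,\<nu>) = (if i \<in> T \<and> finite T then sg1 (T - {i}) i * v (T - {i}, \<nu>) else 0)"
  by (simp add: Zo_def)
lemma Po_app: "Po k v (T,\<nu>) = (if k \<notin> T \<and> finite T then sg1 T k * v (insert k T, \<nu>) else 0)"
  by (simp add: Po_def)
lemma Ze_app: "Ze n lam j v (T,\<nu>) = (if inSl n lam \<nu> then v (T, shift \<nu> j (-1)) else 0)"
  by (simp add: Ze_def)
lemma Pe_app: "Pe n lam j v (T,\<nu>) = (if inSl n lam \<nu> then (\<nu> j + 1) * v (T, shift \<nu> j 1) else 0)"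
  by (simp add: Pe_def)

lemma ZoZo: "Zo i (Zo k v) = (\<lambda>d. - Zo k (Zo i v) d)"
proof (rule ext, clarify)
  fix T \<nu>
  show "Zo i (Zo k v) (T,\<nu>) = - Zo k (Zo i v) (T,\<nu>)"
  proof (cases "i \<noteq> k \<and> i \<in> T \<and> k \<in> T \<and> finite T")
    case True
    define U where "U = T - {i} - {k}"
    have fU: "finite U" "i \<notin> U" "k \<notin> U" using True by (auto simp: U_def)
    have e1: "T - {i} = insert k U" "T - {k} = insert i U" "T - {i} - {k} = U" "T - {k} - {i} = U"
      using True by (auto simp: U_def)
    show ?thesis using True fU
      by (simp add: Zo_app e1 sg1_insert)
  next
    case False
    then show ?thesis by (auto simp: Zo_app)
  qed
qed

lemma PoPo: "Po i (Po k v) = (\<lambda>d. - Po k (Po i v) d)"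
proof (rule ext, clarify)
  fix T \<nu>
  show "Po i (Po k v) (T,\<nu>) = - Po k (Po i v) (T,\<nu>)"
  proof (cases "i \<noteq> k \<and> i \<notin> T \<and> k \<notin> T \<and> finite T")
    case True
    have e1: "insert i (insert k T) = insert k (insert i T)" by auto
    show ?thesis using True
      by (simp add: Po_app e1 sg1_insert)
  next
    case False
    then show ?thesis by (auto simp: Po_app)
  qed
qed

lemma PoZo:
  assumes fin: "\<And>T \<nu>. v (T,\<nu>) \<noteq> 0 \<Longrightarrow> finite T"
  shows "Po k (Zo i v) = (\<lambda>d. (if i = k then v d else 0) - Zo i (Po k v) d)"
proof (rule ext, clarify)
  fix T \<nu>
  show "Po k (Zo i v) (T,\<nu>) = (if i = k then v (T,\<nu>) else 0) - Zo i (Po k v) (T,\<nu>)"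
  proof (cases "i = k")
    case True
    then show ?thesis using fin[of T \<nu>] by (auto simp: Po_app Zo_app insert_absorb)
  next
    case False
    show ?thesis
    proof (cases "i \<in> T \<and> k \<notin> T \<and> finite T")
      case True
      define U where "U = T - {i}"
      have fU: "finite U" "i \<notin> U" "k \<notin> U" using True by (auto simp: U_def)
      have e1: "T = insert i U" "insert k T - {i} = insert k U" using True False by (auto simp: U_def)
      show ?thesis using True False fU
        by (simp add: Zo_app Po_app e1 sg1_insert insert_commute)
    next
      case False
      then show ?thesis using \<open>i \<noteq> k\<close> by (auto simp: Po_app Zo_app)
    qed
  qed
qed



lemma shift_shift_same[simp]: "shift (shift \<nu> j a) j b = shift \<nu> j (a + b)"
  by (simp add: shift_def add.assoc)
lemma shift_0[simp]: "shift \<nu> j 0 = \<nu>"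
  by (simp add: shift_def)
lemma shift_comm: "shift (shift \<nu> j a) l b = shift (shift \<nu> l b) j a"
  by (auto simp: shift_def fun_eq_iff)
lemma shift_app: "shift \<nu> j a l = (if l = j then \<nu> j + a else \<nu> l)"
  by (simp add: shift_def)

lemma ZeZe:
  assumes supp: "\<And>T \<nu>. v (T,\<nu>) \<noteq> 0 \<Longrightarrow> inSl n lam \<nu>"
  shows "Ze n lam l (Ze n lam j v) = Ze n lam j (Ze n lam l v)"
proof (rule ext, clarify)
  fix T \<nu>
  have c: "shift (shift \<nu> l (-1)) j (-1) = shift (shift \<nu> j (-1)) l (-1)" by (rule shift_comm)
  show "Ze n lam l (Ze n lam j v) (T,\<nu>) = Ze n lam j (Ze n lam l v) (T,\<nu>)"
  proof (cases "l = j")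
    case True then show ?thesis by simp
  next
    case lj: False
  show ?thesis
  proof (cases "inSl n lam \<nu> \<and> v (T, shift (shift \<nu> l (-1)) j (-1)) \<noteq> 0")
    case True
    then have s: "inSl n lam (shift (shift \<nu> l (-1)) j (-1))" using supp by blast
    have "inSl n lam (shift \<nu> l (-1))"
      using inSl_coord[of n lam \<nu> "shift (shift \<nu> l (-1)) j (-1)" "shift \<nu> l (-1)"] True s lj by (auto simp: shift_app)
    moreover have "inSl n lam (shift \<nu> j (-1))"
      using inSl_coord[of n lam \<nu> "shift (shift \<nu> l (-1)) j (-1)" "shift \<nu> j (-1)"] True s lj by (auto simp: shift_app)
    ultimately show ?thesis using True c by (simp add: Ze_app)
  next
    case False
    then show ?thesis using c by (auto simp: Ze_app)
  qed
  qed
qed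

lemma PePe:
  assumes supp: "\<And>T \<nu>. v (T,\<nu>) \<noteq> 0 \<Longrightarrow> inSl n lam \<nu>"
  shows "Pe n lam l (Pe n lam j v) = Pe n lam j (Pe n lam l v)"
proof (rule ext, clarify)
  fix T \<nu>
  have c: "shift (shift \<nu> l 1) j 1 = shift (shift \<nu> j 1) l 1" by (rule shift_comm)
  show "Pe n lam l (Pe n lam j v) (T,\<nu>) = Pe n lam j (Pe n lam l v) (T,\<nu>)"
  proof (cases "l = j")
    case True then show ?thesis by simp
  next
    case lj: False
  show ?thesis
  proof (cases "inSl n lam \<nu> \<and> v (T, shift (shift \<nu> l 1) j 1) \<noteq> 0")
    case True
    then have s: "inSl n lam (shift (shift \<nu> l 1) j 1)" using supp by blast
    have "inSl n lam (shift \<nu> l 1)"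
      using inSl_coord[of n lam \<nu> "shift (shift \<nu> l 1) j 1" "shift \<nu> l 1"] True s lj by (auto simp: shift_app)
    moreover have "inSl n lam (shift \<nu> j 1)"
      using inSl_coord[of n lam \<nu> "shift (shift \<nu> l 1) j 1" "shift \<nu> j 1"] True s lj by (auto simp: shift_app)
    ultimately show ?thesis using True c by (simp add: Pe_app shift_app)
  next
    case False
    then show ?thesis using c by (auto simp: Pe_app)
  qed
  qed
qed

lemma PeZe:
  assumes supp: "\<And>T \<nu>. v (T,\<nu>) \<noteq> 0 \<Longrightarrow> inSl n lam \<nu>" and j: "j \<in> {1..n}"
  shows "Pe n lam j (Ze n lam l v) = (\<lambda>d. (if j = l then v d else 0) + Ze n lam l (Pe n lam j v) d)"
proof (rule ext, clarify)
  fix T \<nu>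
  show "Pe n lam j (Ze n lam l v) (T,\<nu>) = (if j = l then v (T,\<nu>) else 0) + Ze n lam l (Pe n lam j v) (T,\<nu>)"
  proof (cases "j = l")
    case True
    show ?thesis
    proof (cases "inSl n lam \<nu>")
      case ok: True
      have "Pe n lam j (Ze n lam l v) (T,\<nu>) = (\<nu> j + 1) * v (T,\<nu>)"
      proof (cases "\<nu> j + 1 = 0")
        case False
        then show ?thesis using ok True inSl_inc[OF ok False j] by (simp add: Pe_app Ze_app)
      qed (use ok True in \<open>simp add: Pe_app Ze_app\<close>)
      moreover have "Ze n lam l (Pe n lam j v) (T,\<nu>) = \<nu> j * v (T,\<nu>)"
      proof (cases "\<nu> j = 0")
        case False
        then show ?thesis using ok True inSl_dec[OF ok False j] by (simp add: Pe_app Ze_app shift_app)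
      qed (use ok True in \<open>simp add: Pe_app Ze_app shift_app\<close>)
      ultimately show ?thesis using True by (simp add: algebra_simps)
    next
      case False
      then show ?thesis using True supp[of T \<nu>] by (auto simp: Pe_app Ze_app)
    qed
  next
    case False
    have c: "shift (shift \<nu> j 1) l (-1) = shift (shift \<nu> l (-1)) j 1" by (rule shift_comm)
    show ?thesis
    proof (cases "inSl n lam \<nu> \<and> v (T, shift (shift \<nu> j 1) l (-1)) \<noteq> 0")
      case True
      then have s: "inSl n lam (shift (shift \<nu> j 1) l (-1))" using supp by blast
      have "inSl n lam (shift \<nu> j 1)"
        using inSl_coord[of n lam \<nu> "shift (shift \<nu> j 1) l (-1)" "shift \<nu> j 1"] True False s by (auto simp: shift_app)
      moreover have "inSl n lam (shift \<nu> l (-1))"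
        using inSl_coord[of n lam \<nu> "shift (shift \<nu> j 1) l (-1)" "shift \<nu> l (-1)"] True False s by (auto simp: shift_app)
      ultimately show ?thesis using True False c by (simp add: Pe_app Ze_app shift_app)
    next
      case F2: False
      then show ?thesis using c False by (auto simp: Pe_app Ze_app)
    qed
  qed
qed

lemma ZoZe: "Zo i (Ze n lam j v) = Ze n lam j (Zo i v)"
  by (rule ext, clarify) (simp add: Zo_app Ze_app)
lemma ZoPe: "Zo i (Pe n lam j v) = Pe n lam j (Zo i v)"
  by (rule ext, clarify) (simp add: Zo_app Pe_app)
lemma PoZe: "Po i (Ze n lam j v) = Ze n lam j (Po i v)"
  by (rule ext, clarify) (simp add: Po_app Ze_app)
lemma PoPe: "Po i (Pe n lam j v) = Pe n lam j (Po i v)"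
  by (rule ext, clarify) (simp add: Po_app Pe_app)



definition ismono :: "(mvec \<Rightarrow> mvec) \<Rightarrow> bool" where
  "ismono F \<longleftrightarrow> (\<exists>w g. \<forall>v d. F v d = w d * v (g d))"

lemma ismono_sum: "ismono F \<Longrightarrow> F (\<lambda>x. \<Sum>c\<in>C. f c x) = (\<lambda>x. \<Sum>c\<in>C. F (f c) x)"
  unfolding ismono_def by (auto simp: sum_distrib_left)
lemma ismono_lin: "ismono F \<Longrightarrow> F (\<lambda>x. \<alpha> * f x + \<beta> * g x) = (\<lambda>x. \<alpha> * F f x + \<beta> * F g x)"
  unfolding ismono_def by (auto simp: algebra_simps)
lemma ismono_scale: "ismono F \<Longrightarrow> F (\<lambda>x. \<alpha> * f x) = (\<lambda>x. \<alpha> * F f x)"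
  unfolding ismono_def by (auto simp: algebra_simps)
lemma ismono_comp: "ismono F \<Longrightarrow> ismono G \<Longrightarrow> ismono (\<lambda>v. F (G v))"
  unfolding ismono_def
proof (elim exE)
  fix w g w' g'
  assume F: "\<forall>v d. F v d = w d * v (g d)" and G: "\<forall>v d. G v d = w' d * v (g' d)"
  show "\<exists>w g. \<forall>v d. F (G v) d = w d * v (g d)"
    by (rule exI[of _ "\<lambda>d. w d * w' (g d)"], rule exI[of _ "\<lambda>d. g' (g d)"]) (simp add: F G)
qed

lemma ismono_Zo: "ismono (Zo i)"
  unfolding ismono_def
  by (rule exI[of _ "\<lambda>(T,\<nu>). if i \<in> T \<and> finite T then sg1 (T - {i}) i else 0"],
      rule exI[of _ "\<lambda>(T,\<nu>). (T - {i}, \<nu>)"]) (auto simp: Zo_def)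
lemma ismono_Po: "ismono (Po i)"
  unfolding ismono_def
  by (rule exI[of _ "\<lambda>(T,\<nu>). if i \<notin> T \<and> finite T then sg1 T i else 0"],
      rule exI[of _ "\<lambda>(T,\<nu>). (insert i T, \<nu>)"]) (auto simp: Po_def)
lemma ismono_Ze: "ismono (Ze n lam j)"
  unfolding ismono_def
  by (rule exI[of _ "\<lambda>(T,\<nu>). if inSl n lam \<nu> then 1 else 0"],
      rule exI[of _ "\<lambda>(T,\<nu>). (T, shift \<nu> j (-1))"]) (auto simp: Ze_def)
lemma ismono_Pe: "ismono (Pe n lam j)"
  unfolding ismono_def
  by (rule exI[of _ "\<lambda>(T,\<nu>). if inSl n lam \<nu> then \<nu> j + 1 else 0"],
      rule exI[of _ "\<lambda>(T,\<nu>). (T, shift \<nu> j 1)"]) (auto simp: Pe_def)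

definition Zg :: "nat \<Rightarrow> nat \<Rightarrow> (nat \<Rightarrow> complex) \<Rightarrow> nat \<Rightarrow> mvec \<Rightarrow> mvec" where
  "Zg m n lam a = (if a \<le> m then Zo a else Ze n lam (a - m))"
definition Pg :: "nat \<Rightarrow> nat \<Rightarrow> (nat \<Rightarrow> complex) \<Rightarrow> nat \<Rightarrow> mvec \<Rightarrow> mvec" where
  "Pg m n lam a = (if a \<le> m then Po a else Pe n lam (a - m))"
definition sgn2 :: "nat \<Rightarrow> nat \<Rightarrow> nat \<Rightarrow> complex" where
  "sgn2 m a c = (if a \<le> m \<and> c \<le> m then -1 else 1)"
definition Eop :: "nat \<Rightarrow> nat \<Rightarrow> (nat \<Rightarrow> complex) \<Rightarrow> nat \<Rightarrow> nat \<Rightarrow> mvec \<Rightarrow> mvec" where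
  "Eop m n lam a b v = Zg m n lam a (Pg m n lam b v)"
definition good :: "nat \<Rightarrow> nat \<Rightarrow> (nat \<Rightarrow> complex) \<Rightarrow> mvec \<Rightarrow> bool" where
  "good m n lam v \<longleftrightarrow> (\<forall>b. v b \<noteq> 0 \<longrightarrow> b \<in> Mbasis m n lam)"

lemma ismono_Zg: "ismono (Zg m n lam a)"
  by (simp add: Zg_def ismono_Zo ismono_Ze)
lemma ismono_Pg: "ismono (Pg m n lam a)"
  by (simp add: Pg_def ismono_Po ismono_Pe)
lemma ismono_Eop: "ismono (Eop m n lam a b)"
  unfolding Eop_def[abs_def] by (rule ismono_comp[OF ismono_Zg ismono_Pg])

lemma good_fin: "good m n lam v \<Longrightarrow> v (T,\<nu>) \<noteq> 0 \<Longrightarrow> finite T"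
  unfolding good_def Mbasis_def by (auto intro: finite_subset)
lemma good_inSl: "good m n lam v \<Longrightarrow> v (T,\<nu>) \<noteq> 0 \<Longrightarrow> inSl n lam \<nu>"
  unfolding good_def Mbasis_def by auto

lemma good_Zg: assumes g: "good m n lam v" and a: "a \<in> {1..m+n}" shows "good m n lam (Zg m n lam a v)"
  unfolding good_def
proof (intro allI impI)
  fix bb assume nz: "Zg m n lam a v bb \<noteq> 0"
  obtain T \<nu> where bb: "bb = (T,\<nu>)" by fastforce
  show "bb \<in> Mbasis m n lam"
  proof (cases "a \<le> m")
    case True
    then have "a \<in> T" "v (T-{a}, \<nu>) \<noteq> 0" using nz bb by (auto simp: Zg_def Zo_def split: if_splits)
    moreover have "T - {a} \<subseteq> {1..m} \<and> inSl n lam \<nu>" using g calculation(2) by (auto simp: good_def Mbasis_def)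
    ultimately show ?thesis using True a bb by (auto simp: Mbasis_def)
  next
    case False
    then have "inSl n lam \<nu>" "v (T, shift \<nu> (a - m) (-1)) \<noteq> 0" using nz bb by (auto simp: Zg_def Ze_def split: if_splits)
    moreover have "T \<subseteq> {1..m}" using g calculation(2) by (auto simp: good_def Mbasis_def)
    ultimately show ?thesis using bb by (auto simp: Mbasis_def)
  qed
qed

lemma good_Pg: assumes g: "good m n lam v" and a: "a \<in> {1..m+n}" shows "good m n lam (Pg m n lam a v)"
  unfolding good_def
proof (intro allI impI)
  fix bb assume nz: "Pg m n lam a v bb \<noteq> 0"
  obtain T \<nu> where bb: "bb = (T,\<nu>)" by fastforce
  show "bb \<in> Mbasis m n lam"
  proof (cases "a \<le> m")
    case True
    then have "v (insert a T, \<nu>) \<noteq> 0" using nz bb by (auto simp: Pg_def Po_def split: if_splits)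
    moreover have "insert a T \<subseteq> {1..m} \<and> inSl n lam \<nu>" using g calculation unfolding good_def Mbasis_def by blast
    ultimately show ?thesis using True a bb by (auto simp: Mbasis_def)
  next
    case False
    then have "inSl n lam \<nu>" "v (T, shift \<nu> (a - m) 1) \<noteq> 0" using nz bb by (auto simp: Pg_def Pe_def split: if_splits)
    moreover have "T \<subseteq> {1..m}" using g calculation(2) by (auto simp: good_def Mbasis_def)
    ultimately show ?thesis using bb by (auto simp: Mbasis_def)
  qed
qed

lemma good_Eop: "good m n lam v \<Longrightarrow> a \<in> {1..m+n} \<Longrightarrow> b \<in> {1..m+n} \<Longrightarrow> good m n lam (Eop m n lam a b v)"
  by (simp add: Eop_def good_Zg good_Pg)

lemma ZgZg: "good m n lam v \<Longrightarrow> a \<in> {1..m+n} \<Longrightarrow> c \<in> {1..m+n} \<Longrightarrow>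
  Zg m n lam a (Zg m n lam c v) = (\<lambda>x. sgn2 m a c * Zg m n lam c (Zg m n lam a v) x)"
  using ZoZo[of a c v] ZeZe[of v n lam "a - m" "c - m"] good_inSl[of m n lam v]
  by (auto simp: Zg_def sgn2_def ZoZe)

lemma PgPg: "good m n lam v \<Longrightarrow> a \<in> {1..m+n} \<Longrightarrow> c \<in> {1..m+n} \<Longrightarrow>
  Pg m n lam a (Pg m n lam c v) = (\<lambda>x. sgn2 m a c * Pg m n lam c (Pg m n lam a v) x)"
  using PoPo[of a c v] PePe[of v n lam "a - m" "c - m"] good_inSl[of m n lam v]
  by (auto simp: Pg_def sgn2_def PoPe)

lemma PgZg: "good m n lam v \<Longrightarrow> b \<in> {1..m+n} \<Longrightarrow> c \<in> {1..m+n} \<Longrightarrow>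
  Pg m n lam b (Zg m n lam c v) = (\<lambda>x. (if b = c then v x else 0) + sgn2 m b c * Zg m n lam c (Pg m n lam b v) x)"
proof -
  assume g: "good m n lam v" and b: "b \<in> {1..m+n}" and c: "c \<in> {1..m+n}"
  show ?thesis
  proof (cases "b \<le> m")
    case bT: True
    show ?thesis
    proof (cases "c \<le> m")
      case True
      then show ?thesis using bT PoZo[of v b c] good_fin[OF g]
        by (auto simp: Pg_def Zg_def sgn2_def fun_eq_iff)
    next
      case False
      then show ?thesis using bT by (auto simp: Pg_def Zg_def sgn2_def PoZe)
    qed
  next
    case bF: False
    show ?thesis
    proof (cases "c \<le> m")
      case True
      then show ?thesis using bF by (auto simp: Pg_def Zg_def sgn2_def ZoPe)
    next
      case False
      have j: "b - m \<in> {1..n}" using b bF by auto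
      have "(b - m = c - m) = (b = c)" using bF False by auto
      then show ?thesis using bF False PeZe[of v n lam "b - m" "c - m", OF _ j] good_inSl[OF g]
        by (auto simp: Pg_def Zg_def sgn2_def)
    qed
  qed
qed

lemma G1: "good m n lam v \<Longrightarrow> a \<in> {1..m+n} \<Longrightarrow> b \<in> {1..m+n} \<Longrightarrow> c \<in> {1..m+n} \<Longrightarrow> d \<in> {1..m+n} \<Longrightarrow>
  Eop m n lam c d (Eop m n lam a b v) x =
   (if d = a then Eop m n lam c b v x else 0) + sgn2 m d a * Zg m n lam c (Zg m n lam a (Pg m n lam d (Pg m n lam b v))) x"
proof -
  assume g: "good m n lam v" and r: "a \<in> {1..m+n}" "b \<in> {1..m+n}" "c \<in> {1..m+n}" "d \<in> {1..m+n}"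
  have gw: "good m n lam (Pg m n lam b v)" using g r good_Pg by blast
  have "Eop m n lam c d (Eop m n lam a b v) = Zg m n lam c (Pg m n lam d (Zg m n lam a (Pg m n lam b v)))"
    by (simp add: Eop_def)
  also have "\<dots> = Zg m n lam c (\<lambda>x. (if d = a then 1 else 0) * Pg m n lam b v x + sgn2 m d a * Zg m n lam a (Pg m n lam d (Pg m n lam b v)) x)"
    by (simp add: PgZg[OF gw r(4) r(1)] if_distrib cong: if_cong)
  also have "\<dots> = (\<lambda>x. (if d = a then 1 else 0) * Zg m n lam c (Pg m n lam b v) x + sgn2 m d a * Zg m n lam c (Zg m n lam a (Pg m n lam d (Pg m n lam b v))) x)"
    by (rule ismono_lin[OF ismono_Zg])
  finally show ?thesis by (simp add: Eop_def)
qed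

lemma G2: "good m n lam v \<Longrightarrow> a \<in> {1..m+n} \<Longrightarrow> b \<in> {1..m+n} \<Longrightarrow> c \<in> {1..m+n} \<Longrightarrow> d \<in> {1..m+n} \<Longrightarrow>
  Zg m n lam a (Zg m n lam c (Pg m n lam b (Pg m n lam d v))) x =
   sgn2 m a c * sgn2 m b d * Zg m n lam c (Zg m n lam a (Pg m n lam d (Pg m n lam b v))) x"
proof -
  assume g: "good m n lam v" and r: "a \<in> {1..m+n}" "b \<in> {1..m+n}" "c \<in> {1..m+n}" "d \<in> {1..m+n}"
  have gw: "good m n lam (Pg m n lam b (Pg m n lam d v))" using g r good_Pg by blast
  have 1: "Zg m n lam a (Zg m n lam c (Pg m n lam b (Pg m n lam d v))) x =
    sgn2 m a c * Zg m n lam c (Zg m n lam a (Pg m n lam b (Pg m n lam d v))) x"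
    by (simp add: ZgZg[OF gw r(1) r(3)])
  have 2: "Pg m n lam b (Pg m n lam d v) = (\<lambda>x. sgn2 m b d * Pg m n lam d (Pg m n lam b v) x)"
    by (rule PgPg[OF g r(2) r(4)])
  have 3: "Zg m n lam c (Zg m n lam a (\<lambda>x. sgn2 m b d * Pg m n lam d (Pg m n lam b v) x)) =
     (\<lambda>x. sgn2 m b d * Zg m n lam c (Zg m n lam a (Pg m n lam d (Pg m n lam b v))) x)"
    by (simp add: ismono_scale[OF ismono_Zg])
  show ?thesis unfolding 1 unfolding 2 3 by simp
qed

lemma Erel: "good m n lam v \<Longrightarrow> a \<in> {1..m+n} \<Longrightarrow> b \<in> {1..m+n} \<Longrightarrow> c \<in> {1..m+n} \<Longrightarrow> d \<in> {1..m+n} \<Longrightarrow>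
  Eop m n lam a b (Eop m n lam c d v) x - psign (par m a \<noteq> par m b) (par m c \<noteq> par m d) * Eop m n lam c d (Eop m n lam a b v) x
  = (if b = c then Eop m n lam a d v x else 0) - psign (par m a \<noteq> par m b) (par m c \<noteq> par m d) * (if d = a then Eop m n lam c b v x else 0)"
proof -
  assume g: "good m n lam v" and r: "a \<in> {1..m+n}" "b \<in> {1..m+n}" "c \<in> {1..m+n}" "d \<in> {1..m+n}"
  define K where "K = Zg m n lam c (Zg m n lam a (Pg m n lam d (Pg m n lam b v))) x"
  have e1: "Eop m n lam a b (Eop m n lam c d v) x = (if b = c then Eop m n lam a d v x else 0) + sgn2 m b c * (sgn2 m a c * sgn2 m b d * K)"
    using G1[OF g r(3) r(4) r(1) r(2), of x] G2[OF g r, of x] by (simp add: K_def)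
  have e2: "Eop m n lam c d (Eop m n lam a b v) x = (if d = a then Eop m n lam c b v x else 0) + sgn2 m d a * K"
    using G1[OF g r, of x] by (simp add: K_def)
  have s: "sgn2 m b c * (sgn2 m a c * sgn2 m b d) = psign (par m a \<noteq> par m b) (par m c \<noteq> par m d) * sgn2 m d a"
    unfolding sgn2_def psign_def par_def by (cases "a \<le> m"; cases "b \<le> m"; cases "c \<le> m"; cases "d \<le> m") auto
  show ?thesis unfolding e1 e2 using s by (simp add: algebra_simps)
qed



lemma gen_app: "gen m n lam ys \<nu>' (T,\<nu>) = (if distinct ys \<and> set ys \<subseteq> {1..m} \<and> inSl n lam \<nu>' \<and> T = set ys \<and> \<nu> = \<nu>' then (-1)^inversions ys else 0)"
  by (auto simp: gen_def)

lemma shift_eq_iff: "(shift \<nu> j a = \<mu>) = (\<nu> = shift \<mu> j (-a))"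
  unfolding shift_def fun_eq_iff
proof (intro iffI allI)
  fix x assume h: "\<forall>x. (\<nu>(j := \<nu> j + a)) x = \<mu> x"
  show "\<nu> x = (\<mu>(j := \<mu> j + - a)) x" using h[rule_format, of x] h[rule_format, of j]
    by (cases "x = j") (auto simp: algebra_simps)
next
  fix x assume h: "\<forall>x. \<nu> x = (\<mu>(j := \<mu> j + - a)) x"
  show "(\<nu>(j := \<nu> j + a)) x = \<mu> x" using h[rule_format, of x] h[rule_format, of j]
    by (cases "x = j") (auto simp: algebra_simps)
qed

lemma C3:
  assumes xs: "distinct xs" "set xs \<subseteq> {1..m}" "inSl n lam mu" and i: "i \<in> {1..m}" and j: "j \<in> {1..n}"
  shows "(\<lambda>d. (-1)^length xs * mu j * gen m n lam (i#xs) (shift mu j (-1)) d) = Zo i (Pe n lam j (gen m n lam xs mu))"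
proof (rule ext, clarify)
  fix T \<nu>
  let ?C = "i \<notin> set xs \<and> T = insert i (set xs) \<and> \<nu> = shift mu j (-1) \<and> inSl n lam (shift mu j (-1))"
  have R: "Zo i (Pe n lam j (gen m n lam xs mu)) (T,\<nu>) = (if i \<in> T \<and> finite T \<and> inSl n lam \<nu> \<and> T - {i} = set xs \<and> shift \<nu> j 1 = mu
      then sg1 (T-{i}) i * ((\<nu> j + 1) * (-1)^inversions xs) else 0)"
    using xs by (simp add: Zo_app Pe_app gen_app)
  have L: "(-1)^length xs * mu j * gen m n lam (i#xs) (shift mu j (-1)) (T,\<nu>) =
     (if ?C then (-1)^length xs * mu j * (-1)^inversions (i#xs) else 0)"
    using xs i by (auto simp: gen_app)
  have eqv: "(i \<in> T \<and> finite T \<and> inSl n lam \<nu> \<and> T - {i} = set xs \<and> shift \<nu> j 1 = mu) = ?C"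
    by (auto simp: shift_eq_iff)
  show "(-1)^length xs * mu j * gen m n lam (i#xs) (shift mu j (-1)) (T,\<nu>) = Zo i (Pe n lam j (gen m n lam xs mu)) (T,\<nu>)"
  proof (cases ?C)
    case True
    have TS: "T - {i} = set xs" using True by auto
    have "(-1::complex)^inversions ([] @ i # xs) = (-1) ^ (inversions ([] @ xs) + length xs) * sgl i ([] @ xs)"
      by (rule inv_mid) (use True in auto)
    then have inv: "(-1::complex)^inversions (i # xs) = (-1) ^ (inversions xs + length xs) * sg1 (set xs) i"
      using sgl_set[OF xs(1)] by (simp add: sg1_def)
    have nu: "\<nu> j + 1 = mu j" using True by (simp add: shift_def)
    show ?thesis unfolding R L using True eqv TS nu inv by (simp add: power_add algebra_simps)
  next
    case False
    have nc: "?C = False" using False by blast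
    have nr: "(i \<in> T \<and> finite T \<and> inSl n lam \<nu> \<and> T - {i} = set xs \<and> shift \<nu> j 1 = mu) = False"
      using False eqv by blast
    show ?thesis unfolding R L nc nr by simp
  qed
qed

lemma sum_pick: "distinct xs \<Longrightarrow> p < length xs \<Longrightarrow> (\<Sum>s<length xs. if xs!s = xs!p then f s else 0) = (f p :: complex)"
proof -
  assume d: "distinct xs" and p: "p < length xs"
  have "(\<Sum>s<length xs. if xs!s = xs!p then f s else 0) = (\<Sum>s<length xs. if s = p then f s else 0)"
    by (rule sum.cong) (use d p in \<open>auto simp: nth_eq_iff_index_eq\<close>)
  also have "\<dots> = f p" using p by simp
  finally show ?thesis .
qed

lemma sum_none: "k \<notin> set xs \<Longrightarrow> (\<Sum>s<length xs. if xs!s = k then f s else 0) = (0::complex)"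
  by (rule sum.neutral) auto

lemma C2:
  assumes xs: "distinct xs" "set xs \<subseteq> {1..m}" "inSl n lam mu" and l: "l \<in> {1..n}" and j: "j \<in> {1..n}"
  shows "(\<lambda>d. mu j * gen m n lam xs (shift (shift mu j (-1)) l 1) d) = Ze n lam l (Pe n lam j (gen m n lam xs mu))"
proof (rule ext, clarify)
  fix T \<nu>
  define mup where "mup = shift (shift mu j (-1)) l 1"
  have sh: "(shift (shift \<nu> l (-1)) j 1 = mu) = (\<nu> = mup)"
    by (simp add: shift_eq_iff mup_def)
  have R: "Ze n lam l (Pe n lam j (gen m n lam xs mu)) (T,\<nu>) = (if inSl n lam \<nu> \<and> inSl n lam (shift \<nu> l (-1)) \<and> T = set xs \<and> \<nu> = mup
     then (shift \<nu> l (-1) j + 1) * (-1)^inversions xs else 0)"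
  proof -
    have sh': "shift (shift mup l (-1)) j 1 = mu" by (simp add: mup_def)
    show ?thesis using xs sh sh' by (auto simp: Ze_app Pe_app gen_app)
  qed
  have L: "mu j * gen m n lam xs mup (T,\<nu>) = (if inSl n lam mup \<and> T = set xs \<and> \<nu> = mup then mu j * (-1)^inversions xs else 0)"
    using xs by (simp add: gen_app)
  have bk: "shift mup l (-1) = shift mu j (-1)" by (simp add: mup_def)
  show "mu j * gen m n lam xs (shift (shift mu j (-1)) l 1) (T,\<nu>) = Ze n lam l (Pe n lam j (gen m n lam xs mu)) (T,\<nu>)"
  proof (cases "inSl n lam mup \<and> T = set xs \<and> \<nu> = mup")
    case True
    have c: "shift mu j (-1) j + 1 = mu j" by (simp add: shift_def)
    show ?thesis
    proof (cases "mu j = 0")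
      case True
      then show ?thesis unfolding mup_def[symmetric] R L using c bk True by simp
    next
      case False
      have "inSl n lam (shift mu j (-1))"
      proof (cases "l = j")
        case True then show ?thesis using inSl_dec[OF xs(3) False j] by simp
      next
        case lj: False
        show ?thesis using inSl_coord[of n lam mu mup "shift mu j (-1)"] xs(3) True lj
          by (auto simp: mup_def shift_app)
      qed
      then show ?thesis unfolding mup_def[symmetric] R L using True c bk by simp
    qed
  next
    case False
    then show ?thesis unfolding mup_def[symmetric] R L by auto
  qed
qed

lemma C4:
  assumes xs: "distinct xs" "set xs \<subseteq> {1..m}" "inSl n lam mu" and i: "i \<in> {1..m}" and j: "j \<in> {1..n}"
  shows "(\<lambda>d. \<Sum>p<length xs. if xs ! p = i then
               (-1) ^ (length xs - Suc p) * gen m n lam (take p xs @ drop (Suc p) xs) (shift mu j 1) d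
             else 0) = Ze n lam j (Po i (gen m n lam xs mu))"
proof (rule ext, clarify)
  fix T \<nu>
  have R: "Ze n lam j (Po i (gen m n lam xs mu)) (T,\<nu>) = (if inSl n lam \<nu> \<and> i \<notin> T \<and> finite T \<and> insert i T = set xs \<and> \<nu> = shift mu j 1
     then sg1 T i * (-1)^inversions xs else 0)"
    using xs by (auto simp: Ze_app Po_app gen_app shift_eq_iff)
  show "(\<Sum>p<length xs. if xs ! p = i then
               (-1) ^ (length xs - Suc p) * gen m n lam (take p xs @ drop (Suc p) xs) (shift mu j 1) (T,\<nu>)
             else 0) = Ze n lam j (Po i (gen m n lam xs mu)) (T,\<nu>)"
  proof (cases "i \<in> set xs")
    case False
    then show ?thesis unfolding R by (auto simp: sum_none)
  next
    case True
    then obtain p where p: "p < length xs" "xs ! p = i" by (auto simp: in_set_conv_nth)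
    define as where "as = take p xs"
    define bs where "bs = drop (Suc p) xs"
    have xsd: "xs = as @ i # bs" by (metis as_def bs_def id_take_nth_drop p)
    have lb: "length xs - Suc p = length bs" using p by (simp add: bs_def)
    have dab: "distinct (as @ bs)" "i \<notin> set (as @ bs)" using xs(1) unfolding xsd by auto
    have sab: "set (as @ bs) \<subseteq> {1..m}" using xs(2) unfolding xsd by auto
    have setxs: "set xs = insert i (set (as @ bs))" unfolding xsd by auto
    have sum: "(\<Sum>p<length xs. if xs ! p = i then
               (-1) ^ (length xs - Suc p) * gen m n lam (take p xs @ drop (Suc p) xs) (shift mu j 1) (T,\<nu>)
             else 0) = (-1) ^ length bs * gen m n lam (as @ bs) (shift mu j 1) (T,\<nu>)"
      using sum_pick[OF xs(1) p(1)] p lb by (simp add: as_def bs_def)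
    have ib: "i \<notin> set bs" using dab by auto
    have inv: "(-1::complex)^inversions xs = (-1) ^ (inversions (as @ bs) + length bs) * sg1 (set (as @ bs)) i"
      unfolding xsd using inv_mid[OF ib, of as] sgl_set[OF dab(1)] by (simp add: sg1_def)
    show ?thesis
    proof (cases "inSl n lam (shift mu j 1) \<and> T = set (as @ bs) \<and> \<nu> = shift mu j 1")
      case True
      have eq: "(inSl n lam \<nu> \<and> i \<notin> T \<and> finite T \<and> insert i T = set xs \<and> \<nu> = shift mu j 1) = True"
        using True dab setxs by auto
      have g: "gen m n lam (as @ bs) (shift mu j 1) (T,\<nu>) = (-1)^inversions (as @ bs)"
        using True dab sab by (auto simp: gen_app)
      have Ti: "T = set (as @ bs)" using True by simp
      define P where "P = (-1::complex) ^ (inversions (as @ bs) + length bs)"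
      define A where "A = sg1 (set (as @ bs)) i"
      have AA: "A * A = 1" by (simp add: A_def)
      have "A * (P * A) = P * (A * A)" by (simp add: algebra_simps)
      then have fin: "A * (P * A) = P" using AA by simp
      show ?thesis unfolding sum R unfolding eq unfolding g unfolding inv unfolding Ti using fin by (simp add: P_def A_def power_add)
    next
      case False
      have eq: "(inSl n lam \<nu> \<and> i \<notin> T \<and> finite T \<and> insert i T = set xs \<and> \<nu> = shift mu j 1) = False"
        using False dab setxs by auto
      show ?thesis unfolding sum R eq using False by (auto simp: gen_app)
    qed
  qed
qed

lemma C1:
  assumes xs: "distinct xs" "set xs \<subseteq> {1..m}" "inSl n lam mu" and i: "i \<in> {1..m}" and k: "k \<in> {1..m}"
  shows "(\<lambda>d. \<Sum>s<length xs. if xs ! s = k then gen m n lam (xs[s := i]) mu d else 0) = Zo i (Po k (gen m n lam xs mu))"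
proof (rule ext, clarify)
  fix T \<nu>
  have R: "Zo i (Po k (gen m n lam xs mu)) (T,\<nu>) = (if i \<in> T \<and> finite T \<and> k \<notin> T - {i} \<and> insert k (T - {i}) = set xs \<and> \<nu> = mu
     then sg1 (T - {i}) i * (sg1 (T - {i}) k * (-1)^inversions xs) else 0)"
    using xs by (auto simp: Zo_app Po_app gen_app)
  show "(\<Sum>s<length xs. if xs ! s = k then gen m n lam (xs[s := i]) mu (T,\<nu>) else 0) = Zo i (Po k (gen m n lam xs mu)) (T,\<nu>)"
  proof (cases "k \<in> set xs")
    case False
    have eq: "(i \<in> T \<and> finite T \<and> k \<notin> T - {i} \<and> insert k (T - {i}) = set xs \<and> \<nu> = mu) = False"
      using False by auto
    show ?thesis unfolding R eq using False by (simp add: sum_none)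
  next
    case True
    then obtain p where p: "p < length xs" "xs ! p = k" by (auto simp: in_set_conv_nth)
    define as where "as = take p xs"
    define bs where "bs = drop (Suc p) xs"
    have xsd: "xs = as @ k # bs" by (metis as_def bs_def id_take_nth_drop p)
    have xsu: "xs[p := i] = as @ i # bs" using p by (simp add: as_def bs_def upd_conv_take_nth_drop)
    have dab: "distinct (as @ bs)" "k \<notin> set (as @ bs)" using xs(1) unfolding xsd by auto
    have sab: "set (as @ bs) \<subseteq> {1..m}" using xs(2) unfolding xsd by auto
    have setxs: "set xs = insert k (set (as @ bs))" unfolding xsd by auto
    have sum: "(\<Sum>s<length xs. if xs ! s = k then gen m n lam (xs[s := i]) mu (T,\<nu>) else 0) = gen m n lam (as @ i # bs) mu (T,\<nu>)"
      using sum_pick[OF xs(1) p(1), of "\<lambda>s. gen m n lam (xs[s := i]) mu (T,\<nu>)"] p xsu by simp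
    have kb: "k \<notin> set bs" using dab by auto
    have invk: "(-1::complex)^inversions xs = (-1) ^ (inversions (as @ bs) + length bs) * sg1 (set (as @ bs)) k"
      unfolding xsd using inv_mid[OF kb, of as] sgl_set[OF dab(1)] by (simp add: sg1_def)
    show ?thesis
    proof (cases "i \<notin> set (as @ bs) \<and> T = insert i (set (as @ bs)) \<and> \<nu> = mu")
      case True
      have ib: "i \<notin> set bs" using True by auto
      have invi: "(-1::complex)^inversions (as @ i # bs) = (-1) ^ (inversions (as @ bs) + length bs) * sg1 (set (as @ bs)) i"
        using inv_mid[OF ib, of as] sgl_set[OF dab(1)] by (simp add: sg1_def)
      have eq: "(i \<in> T \<and> finite T \<and> k \<notin> T - {i} \<and> insert k (T - {i}) = set xs \<and> \<nu> = mu) = True"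
        using True dab setxs by auto
      have Ti: "T - {i} = set (as @ bs)" using True by auto
      have g: "gen m n lam (as @ i # bs) mu (T,\<nu>) = (-1)^inversions (as @ i # bs)"
        using True dab sab i xs(3) by (auto simp: gen_app)
      define P where "P = (-1::complex) ^ (inversions (as @ bs) + length bs)"
      define A where "A = sg1 (set (as @ bs)) i"
      define B where "B = sg1 (set (as @ bs)) k"
      have BB: "B * B = 1" by (simp add: B_def)
      have "A * (B * (P * B)) = P * A * (B * B)" by (simp add: algebra_simps)
      then have fin: "A * (B * (P * B)) = P * A" using BB by simp
      show ?thesis unfolding sum R unfolding eq unfolding g Ti invk invi using fin by (simp add: P_def A_def B_def)
    next
      case False
      have eq: "(i \<in> T \<and> finite T \<and> k \<notin> T - {i} \<and> insert k (T - {i}) = set xs \<and> \<nu> = mu) = False"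
        using False dab setxs by auto
      have g: "gen m n lam (as @ i # bs) mu (T,\<nu>) = 0"
        using False by (auto simp: gen_app)
      show ?thesis unfolding sum R eq g by simp
    qed
  qed
qed



definition dlt :: "mbasis \<Rightarrow> mvec" where "dlt c = (\<lambda>d. if d = c then 1 else 0)"

lemma gen_sorted:
  assumes c: "(S, mu) \<in> Mbasis m n lam"
  shows "gen m n lam (sorted_list_of_set S) mu = dlt (S, mu)"
proof -
  have S: "S \<subseteq> {1..m}" "inSl n lam mu" using c by (auto simp: Mbasis_def)
  have f: "finite S" using S(1) finite_subset by blast
  have inv: "inversions (sorted_list_of_set S) = 0" by (rule inv_sorted) auto
  show ?thesis using S f inv by (auto simp: gen_def dlt_def fun_eq_iff)
qed

lemma basis_act_eq:
  assumes c: "c \<in> Mbasis m n lam" and a: "a \<in> {1..m+n}" and b: "b \<in> {1..m+n}"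
  shows "basis_act m n lam a b c = Eop m n lam a b (dlt c)"
proof -
  obtain S mu where cS: "c = (S, mu)" by fastforce
  have S: "S \<subseteq> {1..m}" "inSl n lam mu" using c cS by (auto simp: Mbasis_def)
  have f: "finite S" using S(1) finite_subset by blast
  define ys where "ys = sorted_list_of_set S"
  have ys: "distinct ys" "set ys \<subseteq> {1..m}" "inSl n lam mu" using f S by (auto simp: ys_def)
  have g: "gen m n lam ys mu = dlt c" using gen_sorted c cS by (simp add: ys_def)
  have ba: "basis_act m n lam a b c =
     (let r = length ys in
      if a \<le> m \<and> b \<le> m then
        (\<lambda>d. \<Sum>s<r. if ys ! s = b then gen m n lam (ys[s := a]) mu d else 0)
      else if m < a \<and> m < b then
        (\<lambda>d. mu (b - m) * gen m n lam ys (shift (shift mu (b - m) (-1)) (a - m) 1) d)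
      else if a \<le> m then
        (\<lambda>d. (-1) ^ r * mu (b - m) * gen m n lam (a # ys) (shift mu (b - m) (-1)) d)
      else
        (\<lambda>d. \<Sum>p<r. if ys ! p = b then
               (-1) ^ (r - Suc p) * gen m n lam (take p ys @ drop (Suc p) ys) (shift mu (a - m) 1) d
             else 0))"
    by (simp only: basis_act_def cS ys_def[symmetric] Let_def fst_conv snd_conv)
  show ?thesis
  proof (cases "a \<le> m")
    case aT: True
    show ?thesis
    proof (cases "b \<le> m")
      case True
      have "basis_act m n lam a b c = Zo a (Po b (gen m n lam ys mu))"
        unfolding ba using C1[OF ys, of a b] aT True a b by (simp add: Let_def)
      then show ?thesis using aT True g by (simp add: Eop_def Zg_def Pg_def)
    next
      case False
      have "basis_act m n lam a b c = Zo a (Pe n lam (b - m) (gen m n lam ys mu))"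
        unfolding ba using C3[OF ys, of a "b - m"] aT False a b by (simp add: Let_def le_diff_conv2)
      then show ?thesis using aT False g by (simp add: Eop_def Zg_def Pg_def)
    qed
  next
    case aF: False
    show ?thesis
    proof (cases "b \<le> m")
      case True
      have "basis_act m n lam a b c = Ze n lam (a - m) (Po b (gen m n lam ys mu))"
        unfolding ba using C4[OF ys, of b "a - m"] aF True a b by (simp add: Let_def le_diff_conv2)
      then show ?thesis using aF True g by (simp add: Eop_def Zg_def Pg_def)
    next
      case False
      have "basis_act m n lam a b c = Ze n lam (a - m) (Pe n lam (b - m) (gen m n lam ys mu))"
        unfolding ba using C2[OF ys, of "a - m" "b - m"] aF False a b by (simp add: Let_def le_diff_conv2)
      then show ?thesis using aF False g by (simp add: Eop_def Zg_def Pg_def)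
    qed
  qed
qed

lemma Mspace_good: "v \<in> Mspace m n lam \<Longrightarrow> good m n lam v"
  by (simp add: Mspace_def good_def)

lemma actM_eq:
  assumes v: "v \<in> Mspace m n lam" and a: "a \<in> {1..m+n}" and b: "b \<in> {1..m+n}"
  shows "actM m n lam a b v = Eop m n lam a b v"
proof -
  let ?C = "{c. v c \<noteq> 0}"
  have fin: "finite ?C" using v by (simp add: Mspace_def)
  have vsum: "v = (\<lambda>x. \<Sum>c\<in>?C. v c * dlt c x)"
  proof
    fix x
    have "(\<Sum>c\<in>?C. v c * dlt c x) = (\<Sum>c\<in>?C. if x = c then v c else 0)"
      by (rule sum.cong) (auto simp: dlt_def)
    also have "\<dots> = v x" using fin by (simp add: sum.delta)
    finally show "v x = (\<Sum>c\<in>?C. v c * dlt c x)" by simp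
  qed
  have "actM m n lam a b v = (\<lambda>d. \<Sum>c\<in>?C. v c * Eop m n lam a b (dlt c) d)"
    unfolding actM_def
  proof (rule ext, rule sum.cong)
    fix d c assume "c \<in> ?C"
    then have "c \<in> Mbasis m n lam" using v unfolding Mspace_def by blast
    then show "v c * basis_act m n lam a b c d = v c * Eop m n lam a b (dlt c) d"
      using basis_act_eq a b by simp
  qed simp
  also have "\<dots> = (\<lambda>d. \<Sum>c\<in>?C. Eop m n lam a b (\<lambda>x. v c * dlt c x) d)"
    by (simp add: ismono_scale[OF ismono_Eop])
  also have "\<dots> = Eop m n lam a b (\<lambda>x. \<Sum>c\<in>?C. v c * dlt c x)"
    by (rule ismono_sum[OF ismono_Eop, symmetric])
  also have "\<dots> = Eop m n lam a b v" using vsum by simp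
  finally show ?thesis .
qed



lemma sum4_swap: "(\<Sum>c\<in>I. \<Sum>d\<in>I. \<Sum>a\<in>I. \<Sum>b\<in>I. f a b c d) = (\<Sum>a\<in>I. \<Sum>b\<in>I. \<Sum>c\<in>I. \<Sum>d\<in>I. (f a b c d :: complex))"
proof -
  have "(\<Sum>c\<in>I. \<Sum>d\<in>I. \<Sum>a\<in>I. \<Sum>b\<in>I. f a b c d) = (\<Sum>c\<in>I. \<Sum>a\<in>I. \<Sum>b\<in>I. \<Sum>d\<in>I. f a b c d)"
  proof (rule sum.cong[OF refl])
    fix c
    have "(\<Sum>d\<in>I. \<Sum>a\<in>I. \<Sum>b\<in>I. f a b c d) = (\<Sum>a\<in>I. \<Sum>d\<in>I. \<Sum>b\<in>I. f a b c d)" by (rule sum.swap)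
    also have "\<dots> = (\<Sum>a\<in>I. \<Sum>b\<in>I. \<Sum>d\<in>I. f a b c d)" by (rule sum.cong[OF refl], rule sum.swap)
    finally show "(\<Sum>d\<in>I. \<Sum>a\<in>I. \<Sum>b\<in>I. f a b c d) = (\<Sum>a\<in>I. \<Sum>b\<in>I. \<Sum>d\<in>I. f a b c d)" .
  qed
  also have "\<dots> = (\<Sum>a\<in>I. \<Sum>c\<in>I. \<Sum>b\<in>I. \<Sum>d\<in>I. f a b c d)" by (rule sum.swap)
  also have "\<dots> = (\<Sum>a\<in>I. \<Sum>b\<in>I. \<Sum>c\<in>I. \<Sum>d\<in>I. f a b c d)" by (rule sum.cong[OF refl], rule sum.swap)
  finally show ?thesis .
qed

lemma ismono_sum2: "ismono F \<Longrightarrow> F (\<lambda>x. \<Sum>c\<in>I. \<Sum>d\<in>J. f c d * g c d x) y = (\<Sum>c\<in>I. \<Sum>d\<in>J. f c d * F (g c d) y)"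
proof -
  assume "ismono F"
  then obtain w gg where h: "\<And>v d. F v d = w d * v (gg d)" unfolding ismono_def by blast
  show ?thesis by (simp add: h sum_distrib_left mult.left_commute)
qed

lemma fin_Zo: "finite {d. v d \<noteq> 0} \<Longrightarrow> finite {d. Zo i v d \<noteq> 0}"
proof -
  assume f: "finite {d. v d \<noteq> 0}"
  have "{d. Zo i v d \<noteq> 0} \<subseteq> (\<lambda>(S,\<nu>). (insert i S, \<nu>)) ` {d. v d \<noteq> 0}"
  proof clarify
    fix T \<nu> assume "Zo i v (T,\<nu>) \<noteq> 0"
    then have "i \<in> T" "v (T - {i}, \<nu>) \<noteq> 0" by (auto simp: Zo_app split: if_splits)
    then show "(T,\<nu>) \<in> (\<lambda>(S,\<nu>). (insert i S, \<nu>)) ` {d. v d \<noteq> 0}"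
      by (auto intro!: image_eqI[of _ _ "(T - {i}, \<nu>)"])
  qed
  then show ?thesis using f finite_subset by blast
qed

lemma fin_Po: "finite {d. v d \<noteq> 0} \<Longrightarrow> finite {d. Po i v d \<noteq> 0}"
proof -
  assume f: "finite {d. v d \<noteq> 0}"
  have "{d. Po i v d \<noteq> 0} \<subseteq> (\<lambda>(S,\<nu>). (S - {i}, \<nu>)) ` {d. v d \<noteq> 0}"
  proof clarify
    fix T \<nu> assume "Po i v (T,\<nu>) \<noteq> 0"
    then have "i \<notin> T" "v (insert i T, \<nu>) \<noteq> 0" by (auto simp: Po_app split: if_splits)
    then show "(T,\<nu>) \<in> (\<lambda>(S,\<nu>). (S - {i}, \<nu>)) ` {d. v d \<noteq> 0}"
      by (auto intro!: image_eqI[of _ _ "(insert i T, \<nu>)"])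
  qed
  then show ?thesis using f finite_subset by blast
qed

lemma fin_Ze: "finite {d. v d \<noteq> 0} \<Longrightarrow> finite {d. Ze n lam j v d \<noteq> 0}"
proof -
  assume f: "finite {d. v d \<noteq> 0}"
  have "{d. Ze n lam j v d \<noteq> 0} \<subseteq> (\<lambda>(S,\<nu>). (S, shift \<nu> j 1)) ` {d. v d \<noteq> 0}"
  proof clarify
    fix T \<nu> assume "Ze n lam j v (T,\<nu>) \<noteq> 0"
    then have "v (T, shift \<nu> j (-1)) \<noteq> 0" by (auto simp: Ze_app split: if_splits)
    then show "(T,\<nu>) \<in> (\<lambda>(S,\<nu>). (S, shift \<nu> j 1)) ` {d. v d \<noteq> 0}"
      by (auto intro!: image_eqI[of _ _ "(T, shift \<nu> j (-1))"])
  qed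
  then show ?thesis using f finite_subset by blast
qed

lemma fin_Pe: "finite {d. v d \<noteq> 0} \<Longrightarrow> finite {d. Pe n lam j v d \<noteq> 0}"
proof -
  assume f: "finite {d. v d \<noteq> 0}"
  have "{d. Pe n lam j v d \<noteq> 0} \<subseteq> (\<lambda>(S,\<nu>). (S, shift \<nu> j (-1))) ` {d. v d \<noteq> 0}"
  proof clarify
    fix T \<nu> assume "Pe n lam j v (T,\<nu>) \<noteq> 0"
    then have "v (T, shift \<nu> j 1) \<noteq> 0" by (auto simp: Pe_app split: if_splits)
    then show "(T,\<nu>) \<in> (\<lambda>(S,\<nu>). (S, shift \<nu> j (-1))) ` {d. v d \<noteq> 0}"
      by (auto intro!: image_eqI[of _ _ "(T, shift \<nu> j 1)"])
  qed
  then show ?thesis using f finite_subset by blast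
qed

lemma fin_Eop: "finite {d. v d \<noteq> 0} \<Longrightarrow> finite {d. Eop m n lam a b v d \<noteq> 0}"
  unfolding Eop_def Zg_def Pg_def by (auto intro: fin_Zo fin_Po fin_Ze fin_Pe)

lemma Mspace_Eop: "v \<in> Mspace m n lam \<Longrightarrow> a \<in> {1..m+n} \<Longrightarrow> b \<in> {1..m+n} \<Longrightarrow> Eop m n lam a b v \<in> Mspace m n lam"
  using fin_Eop[of v m n lam a b] good_Eop[OF Mspace_good, of v m n lam a b]
  by (simp add: Mspace_def good_def)

lemma rho_eq: "v \<in> Mspace m n lam \<Longrightarrow>
  rho m n lam X v = (\<lambda>d. \<Sum>a\<in>{1..m+n}. \<Sum>b\<in>{1..m+n}. X a b * Eop m n lam a b v d)"
  unfolding rho_def by (intro ext sum.cong refl) (simp add: actM_eq)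

lemma rho_nz: "v \<in> Mspace m n lam \<Longrightarrow> rho m n lam X v d \<noteq> 0 \<Longrightarrow>
  \<exists>a\<in>{1..m+n}. \<exists>b\<in>{1..m+n}. X a b \<noteq> 0 \<and> Eop m n lam a b v d \<noteq> 0"
proof -
  assume v: "v \<in> Mspace m n lam" and nz: "rho m n lam X v d \<noteq> 0"
  then have "(\<Sum>a\<in>{1..m+n}. \<Sum>b\<in>{1..m+n}. X a b * Eop m n lam a b v d) \<noteq> 0" by (simp add: rho_eq)
  then obtain a where a: "a \<in> {1..m+n}" "(\<Sum>b\<in>{1..m+n}. X a b * Eop m n lam a b v d) \<noteq> 0"
    by (meson sum.not_neutral_contains_not_neutral)
  then obtain b where b: "b \<in> {1..m+n}" "X a b * Eop m n lam a b v d \<noteq> 0"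
    by (meson sum.not_neutral_contains_not_neutral)
  then have "X a b \<noteq> 0 \<and> Eop m n lam a b v d \<noteq> 0" by simp
  then show ?thesis using a b by blast
qed

lemma Mspace_rho: "v \<in> Mspace m n lam \<Longrightarrow> rho m n lam X v \<in> Mspace m n lam"
proof -
  assume v: "v \<in> Mspace m n lam"
  let ?I = "{1..m+n}"
  have sub: "{d. rho m n lam X v d \<noteq> 0} \<subseteq> (\<Union>a\<in>?I. \<Union>b\<in>?I. {d. Eop m n lam a b v d \<noteq> 0})"
    using rho_nz[OF v] by blast
  have fin: "finite (\<Union>a\<in>?I. \<Union>b\<in>?I. {d. Eop m n lam a b v d \<noteq> 0})"
    using Mspace_Eop[OF v] by (auto simp: Mspace_def)
  have good: "\<forall>d. rho m n lam X v d \<noteq> 0 \<longrightarrow> d \<in> Mbasis m n lam"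
    using rho_nz[OF v] Mspace_Eop[OF v] unfolding Mspace_def by blast
  show ?thesis using finite_subset[OF sub fin] good by (simp add: Mspace_def)
qed



definition Dsum :: "nat \<Rightarrow> (nat \<Rightarrow> complex) \<Rightarrow> (nat \<Rightarrow> complex) \<Rightarrow> complex" where
  "Dsum n lam \<nu> = (\<Sum>j=1..n. lam j - \<nu> j)"

lemma Dsum_shift: "j \<in> {1..n} \<Longrightarrow> Dsum n lam (shift \<nu> j e) = Dsum n lam \<nu> - e"
proof -
  assume j: "j \<in> {1..n}"
  have "Dsum n lam (shift \<nu> j e) = (\<Sum>x=1..n. (lam x - \<nu> x) - (if x = j then e else 0))"
    unfolding Dsum_def by (rule sum.cong) (auto simp: shift_app)
  also have "\<dots> = Dsum n lam \<nu> - e" using j by (simp add: sum_subtractf Dsum_def)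
  finally show ?thesis .
qed

lemma Eop_ex:
  assumes a: "a \<in> {1..m+n}" and b: "b \<in> {1..m+n}" and nz: "Eop m n lam a b v d \<noteq> 0"
  shows "\<exists>c. v c \<noteq> 0 \<and> (\<exists>e::int. Dsum n lam (snd d) = Dsum n lam (snd c) + of_int e \<and> odd e = (par m a \<noteq> par m b))"
proof -
  obtain T \<nu> where d: "d = (T,\<nu>)" by fastforce
  show ?thesis
  proof (cases "a \<le> m")
    case aT: True
    show ?thesis
    proof (cases "b \<le> m")
      case True
      then have "v (insert b (T - {a}), \<nu>) \<noteq> 0" using nz aT d
        by (auto simp: Eop_def Zg_def Pg_def Zo_app Po_app split: if_splits)
      moreover have "odd (0::int) = (par m a \<noteq> par m b)" using aT True by (simp add: par_def)
      ultimately show ?thesis using d by (intro exI[of _ "(insert b (T - {a}), \<nu>)"] conjI exI[of _ "0::int"]) simp_all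
    next
      case False
      have j: "b - m \<in> {1..n}" using False b by auto
      have "v (T - {a}, shift \<nu> (b - m) 1) \<noteq> 0" using nz aT False d
        by (auto simp: Eop_def Zg_def Pg_def Zo_app Pe_app split: if_splits)
      moreover have "Dsum n lam \<nu> = Dsum n lam (shift \<nu> (b - m) 1) + of_int 1"
        using Dsum_shift[OF j] by simp
      moreover have "odd (1::int) = (par m a \<noteq> par m b)" using aT False by (simp add: par_def)
      ultimately show ?thesis using d by (intro exI[of _ "(T - {a}, shift \<nu> (b - m) 1)"]) (simp only: snd_conv, blast)
    qed
  next
    case aF: False
    have l: "a - m \<in> {1..n}" using aF a by auto
    show ?thesis
    proof (cases "b \<le> m")
      case True
      have "v (insert b T, shift \<nu> (a - m) (-1)) \<noteq> 0" using nz aF True d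
        by (auto simp: Eop_def Zg_def Pg_def Ze_app Po_app split: if_splits)
      moreover have "Dsum n lam \<nu> = Dsum n lam (shift \<nu> (a - m) (-1)) + of_int (-1)"
        using Dsum_shift[OF l] by simp
      moreover have "odd (-1::int) = (par m a \<noteq> par m b)" using aF True by (simp add: par_def)
      ultimately show ?thesis using d by (intro exI[of _ "(insert b T, shift \<nu> (a - m) (-1))"]) (simp only: snd_conv, blast)
    next
      case False
      have j: "b - m \<in> {1..n}" using False b by auto
      have "v (T, shift (shift \<nu> (a - m) (-1)) (b - m) 1) \<noteq> 0" using nz aF False d
        by (auto simp: Eop_def Zg_def Pg_def Ze_app Pe_app split: if_splits)
      moreover have "Dsum n lam \<nu> = Dsum n lam (shift (shift \<nu> (a - m) (-1)) (b - m) 1) + of_int 0"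
        using Dsum_shift[OF j] Dsum_shift[OF l] by simp
      moreover have "odd (0::int) = (par m a \<noteq> par m b)" using aF False by (simp add: par_def)
      ultimately show ?thesis using d by (intro exI[of _ "(T, shift (shift \<nu> (a - m) (-1)) (b - m) 1)"]) (simp only: snd_conv, blast)
    qed
  qed
qed

lemma grading:
  assumes X: "homog m X p" and v: "v \<in> Mspace m n lam" and hv: "Mhom n lam v q"
  shows "Mhom n lam (rho m n lam X v) (p \<noteq> q)"
  unfolding Mhom_def
proof (intro allI impI)
  fix d assume nz: "rho m n lam X v d \<noteq> 0"
  obtain a b where ab: "a \<in> {1..m+n}" "b \<in> {1..m+n}" "X a b \<noteq> 0" "Eop m n lam a b v d \<noteq> 0"
    using rho_nz[OF v nz] by blast
  have pab: "(par m a \<noteq> par m b) = p" using X ab(3) by (simp add: homog_def)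
  obtain c e where c: "v c \<noteq> 0" "Dsum n lam (snd d) = Dsum n lam (snd c) + of_int e" "odd e = (par m a \<noteq> par m b)"
    using Eop_ex[OF ab(1,2,4)] by blast
  obtain k where k: "Dsum n lam (snd c) = of_int k" "odd k = q"
    using hv c(1) unfolding Mhom_def Dsum_def by blast
  have "Dsum n lam (snd d) = of_int (k + e)" using c(2) k(1) by simp
  moreover have "odd (k + e) = (p \<noteq> q)" using k(2) c(3) pab by auto
  ultimately show "\<exists>k::int. (\<Sum>j = 1..n. lam j - snd d j) = of_int k \<and> odd k = (p \<noteq> q)"
    unfolding Dsum_def by blast
qed



lemma sum_pick_mult: "finite I \<Longrightarrow> a \<in> I \<Longrightarrow> (\<Sum>d\<in>I. f d * (if d = a then t else 0)) = f a * (t::complex)"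
proof -
  assume fI: "finite I" and a: "a \<in> I"
  have "(\<Sum>d\<in>I. f d * (if d = a then t else 0)) = (\<Sum>d\<in>I. if d = a then f d * t else 0)"
    by (rule sum.cong) auto
  also have "\<dots> = f a * t" using fI a by simp
  finally show ?thesis .
qed

lemma sum3_rev: "(\<Sum>a\<in>I. \<Sum>b\<in>I. \<Sum>c\<in>I. f a b c) = (\<Sum>c\<in>I. \<Sum>b\<in>I. \<Sum>a\<in>I. (f a b c :: complex))"
proof -
  have "(\<Sum>a\<in>I. \<Sum>b\<in>I. \<Sum>c\<in>I. f a b c) = (\<Sum>b\<in>I. \<Sum>a\<in>I. \<Sum>c\<in>I. f a b c)" by (rule sum.swap)
  also have "\<dots> = (\<Sum>b\<in>I. \<Sum>c\<in>I. \<Sum>a\<in>I. f a b c)" by (rule sum.cong[OF refl], rule sum.swap)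
  also have "\<dots> = (\<Sum>c\<in>I. \<Sum>b\<in>I. \<Sum>a\<in>I. f a b c)" by (rule sum.swap)
  finally show ?thesis .
qed

lemma bracket:
  assumes X: "homog m X p" and Y: "homog m Y q" and v: "v \<in> Mspace m n lam"
  shows "rho m n lam (sbracket (m+n) p q X Y) v =
        (\<lambda>d. rho m n lam X (rho m n lam Y v) d - psign p q * rho m n lam Y (rho m n lam X v) d)"
proof (rule ext)
  fix x
  define I where "I = {1..m+n}"
  define E where "E = Eop m n lam"
  define ps where "ps = psign p q"
  have fI: "finite I" by (simp add: I_def)
  have rY: "rho m n lam Y v \<in> Mspace m n lam" by (rule Mspace_rho[OF v])
  have rX: "rho m n lam X v \<in> Mspace m n lam" by (rule Mspace_rho[OF v])
  have A: "rho m n lam X (rho m n lam Y v) x = (\<Sum>a\<in>I. \<Sum>b\<in>I. \<Sum>c\<in>I. \<Sum>d\<in>I. X a b * Y c d * E a b (E c d v) x)"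
  proof -
    have "rho m n lam X (rho m n lam Y v) x = (\<Sum>a\<in>I. \<Sum>b\<in>I. X a b * E a b (rho m n lam Y v) x)"
      by (simp add: rho_eq[OF rY] I_def E_def)
    also have "\<dots> = (\<Sum>a\<in>I. \<Sum>b\<in>I. X a b * (\<Sum>c\<in>I. \<Sum>d\<in>I. Y c d * E a b (E c d v) x))"
      unfolding rho_eq[OF v] E_def I_def by (simp add: ismono_sum2[OF ismono_Eop])
    also have "\<dots> = (\<Sum>a\<in>I. \<Sum>b\<in>I. \<Sum>c\<in>I. \<Sum>d\<in>I. X a b * Y c d * E a b (E c d v) x)"
      by (simp add: sum_distrib_left mult.assoc)
    finally show ?thesis .
  qed
  have B: "rho m n lam Y (rho m n lam X v) x = (\<Sum>a\<in>I. \<Sum>b\<in>I. \<Sum>c\<in>I. \<Sum>d\<in>I. X a b * Y c d * E c d (E a b v) x)"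
  proof -
    have "rho m n lam Y (rho m n lam X v) x = (\<Sum>c\<in>I. \<Sum>d\<in>I. Y c d * E c d (rho m n lam X v) x)"
      by (simp add: rho_eq[OF rX] I_def E_def)
    also have "\<dots> = (\<Sum>c\<in>I. \<Sum>d\<in>I. Y c d * (\<Sum>a\<in>I. \<Sum>b\<in>I. X a b * E c d (E a b v) x))"
      unfolding rho_eq[OF v] E_def I_def by (simp add: ismono_sum2[OF ismono_Eop])
    also have "\<dots> = (\<Sum>c\<in>I. \<Sum>d\<in>I. \<Sum>a\<in>I. \<Sum>b\<in>I. X a b * Y c d * E c d (E a b v) x)"
      by (simp add: sum_distrib_left mult_ac)
    also have "\<dots> = (\<Sum>a\<in>I. \<Sum>b\<in>I. \<Sum>c\<in>I. \<Sum>d\<in>I. X a b * Y c d * E c d (E a b v) x)"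
      by (rule sum4_swap)
    finally show ?thesis .
  qed
  have C: "X a b * Y c d * E a b (E c d v) x - ps * (X a b * Y c d * E c d (E a b v) x) =
     X a b * Y c d * (if b = c then E a d v x else 0) - ps * (X a b * Y c d * (if d = a then E c b v x else 0))"
    if abcd: "a \<in> I" "b \<in> I" "c \<in> I" "d \<in> I" for a b c d
  proof (cases "X a b = 0 \<or> Y c d = 0")
    case True then show ?thesis by auto
  next
    case False
    have "ps = psign (par m a \<noteq> par m b) (par m c \<noteq> par m d)"
      using X Y False by (simp add: homog_def ps_def)
    then have "E a b (E c d v) x - ps * E c d (E a b v) x = (if b = c then E a d v x else 0) - ps * (if d = a then E c b v x else 0)"
      using Erel[OF Mspace_good[OF v], of a b c d x] abcd by (simp add: E_def I_def)
    then have "X a b * Y c d * (E a b (E c d v) x - ps * E c d (E a b v) x) =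
        X a b * Y c d * ((if b = c then E a d v x else 0) - ps * (if d = a then E c b v x else 0))" by simp
    then show ?thesis by (simp add: algebra_simps)
  qed
  have T1: "(\<Sum>a\<in>I. \<Sum>b\<in>I. \<Sum>c\<in>I. \<Sum>d\<in>I. X a b * Y c d * (if b = c then E a d v x else 0))
     = (\<Sum>a\<in>I. \<Sum>c\<in>I. mmul (m+n) X Y a c * E a c v x)"
  proof -
    have "(\<Sum>a\<in>I. \<Sum>b\<in>I. \<Sum>c\<in>I. \<Sum>d\<in>I. X a b * Y c d * (if b = c then E a d v x else 0))
        = (\<Sum>a\<in>I. \<Sum>b\<in>I. \<Sum>d\<in>I. X a b * Y b d * E a d v x)"
    proof (rule sum.cong[OF refl], rule sum.cong[OF refl])
      fix a b assume "a \<in> I" and b: "b \<in> I"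
      have "(\<Sum>c\<in>I. \<Sum>d\<in>I. X a b * Y c d * (if b = c then E a d v x else 0))
          = (\<Sum>d\<in>I. \<Sum>c\<in>I. X a b * Y c d * (if b = c then E a d v x else 0))" by (rule sum.swap)
      also have "\<dots> = (\<Sum>d\<in>I. X a b * Y b d * E a d v x)"
      proof (rule sum.cong[OF refl])
        fix d
        show "(\<Sum>c\<in>I. X a b * Y c d * (if b = c then E a d v x else 0)) = X a b * Y b d * E a d v x"
          using sum_pick_mult[OF fI b, of "\<lambda>c. X a b * Y c d" "E a d v x"] by (simp add: eq_commute)
      qed
      finally show "(\<Sum>c\<in>I. \<Sum>d\<in>I. X a b * Y c d * (if b = c then E a d v x else 0)) = (\<Sum>d\<in>I. X a b * Y b d * E a d v x)" .
    qed
    also have "\<dots> = (\<Sum>a\<in>I. \<Sum>d\<in>I. \<Sum>b\<in>I. X a b * Y b d * E a d v x)"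
      by (rule sum.cong[OF refl], rule sum.swap)
    also have "\<dots> = (\<Sum>a\<in>I. \<Sum>c\<in>I. mmul (m+n) X Y a c * E a c v x)"
      by (simp add: mmul_def I_def sum_distrib_right)
    finally show ?thesis .
  qed
  have T2: "(\<Sum>a\<in>I. \<Sum>b\<in>I. \<Sum>c\<in>I. \<Sum>d\<in>I. X a b * Y c d * (if d = a then E c b v x else 0))
     = (\<Sum>a\<in>I. \<Sum>c\<in>I. mmul (m+n) Y X a c * E a c v x)"
  proof -
    have "(\<Sum>a\<in>I. \<Sum>b\<in>I. \<Sum>c\<in>I. \<Sum>d\<in>I. X a b * Y c d * (if d = a then E c b v x else 0))
        = (\<Sum>a\<in>I. \<Sum>b\<in>I. \<Sum>c\<in>I. X a b * Y c a * E c b v x)"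
    proof (rule sum.cong[OF refl], rule sum.cong[OF refl], rule sum.cong[OF refl])
      fix a b c assume a: "a \<in> I" and "b \<in> I" and "c \<in> I"
      show "(\<Sum>d\<in>I. X a b * Y c d * (if d = a then E c b v x else 0)) = X a b * Y c a * E c b v x"
        using sum_pick_mult[OF fI a, of "\<lambda>d. X a b * Y c d" "E c b v x"] by simp
    qed
    also have "\<dots> = (\<Sum>c\<in>I. \<Sum>b\<in>I. \<Sum>a\<in>I. X a b * Y c a * E c b v x)"
      by (rule sum3_rev)
    also have "\<dots> = (\<Sum>a\<in>I. \<Sum>c\<in>I. mmul (m+n) Y X a c * E a c v x)"
    proof (rule sum.cong[OF refl], rule sum.cong[OF refl])
      fix c b
      show "(\<Sum>a\<in>I. X a b * Y c a * E c b v x) = mmul (m+n) Y X c b * E c b v x"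
        unfolding mmul_def I_def sum_distrib_right by (rule sum.cong[OF refl]) (simp add: mult_ac)
    qed
    finally show ?thesis .
  qed
  have L: "rho m n lam (sbracket (m+n) p q X Y) v x =
     (\<Sum>a\<in>I. \<Sum>c\<in>I. mmul (m+n) X Y a c * E a c v x) - ps * (\<Sum>a\<in>I. \<Sum>c\<in>I. mmul (m+n) Y X a c * E a c v x)"
  proof -
    have "rho m n lam (sbracket (m+n) p q X Y) v x =
      (\<Sum>a\<in>I. \<Sum>c\<in>I. mmul (m+n) X Y a c * E a c v x - ps * (mmul (m+n) Y X a c * E a c v x))"
      unfolding rho_eq[OF v] sbracket_def E_def I_def ps_def
      by (rule sum.cong[OF refl], rule sum.cong[OF refl]) (simp add: algebra_simps)
    also have "\<dots> = (\<Sum>a\<in>I. \<Sum>c\<in>I. mmul (m+n) X Y a c * E a c v x) - ps * (\<Sum>a\<in>I. \<Sum>c\<in>I. mmul (m+n) Y X a c * E a c v x)"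
      by (simp only: sum_subtractf sum_distrib_left)
    finally show ?thesis .
  qed
  have "rho m n lam X (rho m n lam Y v) x - ps * rho m n lam Y (rho m n lam X v) x
     = (\<Sum>a\<in>I. \<Sum>b\<in>I. \<Sum>c\<in>I. \<Sum>d\<in>I. X a b * Y c d * E a b (E c d v) x - ps * (X a b * Y c d * E c d (E a b v) x))"
    unfolding A B by (simp add: sum_subtractf sum_distrib_left)
  also have "\<dots> = (\<Sum>a\<in>I. \<Sum>b\<in>I. \<Sum>c\<in>I. \<Sum>d\<in>I. X a b * Y c d * (if b = c then E a d v x else 0) - ps * (X a b * Y c d * (if d = a then E c b v x else 0)))"
    by (rule sum.cong[OF refl], rule sum.cong[OF refl], rule sum.cong[OF refl], rule sum.cong[OF refl], rule C) auto
  also have "\<dots> = (\<Sum>a\<in>I. \<Sum>b\<in>I. \<Sum>c\<in>I. \<Sum>d\<in>I. X a b * Y c d * (if b = c then E a d v x else 0))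
     - ps * (\<Sum>a\<in>I. \<Sum>b\<in>I. \<Sum>c\<in>I. \<Sum>d\<in>I. X a b * Y c d * (if d = a then E c b v x else 0))"
    by (simp add: sum_subtractf sum_distrib_left)
  finally show "rho m n lam (sbracket (m+n) p q X Y) v x =
     rho m n lam X (rho m n lam Y v) x - psign p q * rho m n lam Y (rho m n lam X v) x"
    unfolding L T1 T2 ps_def[symmetric] by simp
qed



lemma gen_nz: "gen m n lam xs mu \<noteq> (\<lambda>_. 0) \<Longrightarrow> distinct xs \<and> set xs \<subseteq> {1..m} \<and> inSl n lam mu"
  unfolding gen_def by (auto split: if_splits)

lemma gen_Mspace: "gen m n lam xs mu \<in> Mspace m n lam"
proof -
  have "{b. gen m n lam xs mu b \<noteq> 0} \<subseteq> {(set xs, mu)}" by (auto simp: gen_def split: if_splits)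
  then have "finite {b. gen m n lam xs mu b \<noteq> 0}" using finite_subset by blast
  moreover have "\<forall>b. gen m n lam xs mu b \<noteq> 0 \<longrightarrow> b \<in> Mbasis m n lam"
    by (auto simp: gen_def Mbasis_def split: if_splits)
  ultimately show ?thesis by (simp add: Mspace_def)
qed

lemma rho_Eunit:
  assumes w: "w \<in> Mspace m n lam" and a: "a \<in> {1..m+n}" and b: "b \<in> {1..m+n}"
  shows "rho m n lam (Eunit a b) w = Eop m n lam a b w"
proof (rule ext)
  fix d
  have "rho m n lam (Eunit a b) w d = (\<Sum>a'\<in>{1..m+n}. \<Sum>b'\<in>{1..m+n}. Eunit a b a' b' * Eop m n lam a' b' w d)"
    by (simp add: rho_eq[OF w])
  also have "\<dots> = (\<Sum>a'\<in>{1..m+n}. if a' = a then Eop m n lam a b w d else 0)"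
  proof (rule sum.cong[OF refl])
    fix a'
    show "(\<Sum>b'\<in>{1..m+n}. Eunit a b a' b' * Eop m n lam a' b' w d) = (if a' = a then Eop m n lam a b w d else 0)"
    proof (cases "a' = a")
      case True
      then have "(\<Sum>b'\<in>{1..m+n}. Eunit a b a' b' * Eop m n lam a' b' w d) = (\<Sum>b'\<in>{1..m+n}. if b' = b then Eop m n lam a b' w d else 0)"
        by (intro sum.cong) (auto simp: Eunit_def)
      then show ?thesis using True b by simp
    next
      case False
      then show ?thesis by (simp add: Eunit_def)
    qed
  qed
  also have "\<dots> = Eop m n lam a b w d" using a b by simp
  finally show "rho m n lam (Eunit a b) w d = Eop m n lam a b w d" .
qed

theorem lemma4p1:
  fixes m n :: nat and lam :: "nat \<Rightarrow> complex"
  shows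
    "(\<forall>X\<in>glmn m n. \<forall>v\<in>Mspace m n lam. rho m n lam X v \<in> Mspace m n lam)
   \<and> (\<forall>X\<in>glmn m n. \<forall>p q v. homog m X p \<longrightarrow> v \<in> Mspace m n lam \<longrightarrow> Mhom n lam v q \<longrightarrow>
        Mhom n lam (rho m n lam X v) (p \<noteq> q))
   \<and> (\<forall>X\<in>glmn m n. \<forall>Y\<in>glmn m n. \<forall>p q v. homog m X p \<longrightarrow> homog m Y q \<longrightarrow> v \<in> Mspace m n lam \<longrightarrow>
        rho m n lam (sbracket (m+n) p q X Y) v =
        (\<lambda>d. rho m n lam X (rho m n lam Y v) d - psign p q * rho m n lam Y (rho m n lam X v) d))
   \<and> (\<forall>xs mu. gen m n lam xs mu \<noteq> (\<lambda>_. 0) \<longrightarrow>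
        (\<forall>i\<in>{1..m}. \<forall>k\<in>{1..m}.
           rho m n lam (Eunit i k) (gen m n lam xs mu) =
           (\<lambda>d. \<Sum>s<length xs. if xs ! s = k then gen m n lam (xs[s := i]) mu d else 0))
      \<and> (\<forall>l\<in>{1..n}. \<forall>j\<in>{1..n}.
           rho m n lam (Eunit (m+l) (m+j)) (gen m n lam xs mu) =
           (\<lambda>d. mu j * gen m n lam xs (shift (shift mu j (-1)) l 1) d))
      \<and> (\<forall>i\<in>{1..m}. \<forall>j\<in>{1..n}.
           rho m n lam (Eunit i (m+j)) (gen m n lam xs mu) =
           (\<lambda>d. (-1) ^ length xs * mu j * gen m n lam (i # xs) (shift mu j (-1)) d)
         \<and> rho m n lam (Eunit (m+j) i) (gen m n lam xs mu) =
           (if i \<notin> set xs then (\<lambda>_. 0) else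
            (\<lambda>d. \<Sum>p<length xs. if xs ! p = i then
               (-1) ^ (length xs - Suc p) * gen m n lam (take p xs @ drop (Suc p) xs) (shift mu j 1) d
             else 0))))"
proof (intro conjI ballI allI impI)
  fix X v assume "v \<in> Mspace m n lam"
  then show "rho m n lam X v \<in> Mspace m n lam" by (rule Mspace_rho)
next
  fix X p q v assume "homog m X p" "v \<in> Mspace m n lam" "Mhom n lam v q"
  then show "Mhom n lam (rho m n lam X v) (p \<noteq> q)" by (rule grading)
next
  fix X Y p q v assume "homog m X p" "homog m Y q" "v \<in> Mspace m n lam"
  then show "rho m n lam (sbracket (m+n) p q X Y) v =
        (\<lambda>d. rho m n lam X (rho m n lam Y v) d - psign p q * rho m n lam Y (rho m n lam X v) d)"
    by (rule bracket)
next
  fix xs mu i k assume nz: "gen m n lam xs mu \<noteq> (\<lambda>_. 0)" and i: "i \<in> {1..m}" and k: "k \<in> {1..m}"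
  have xs: "distinct xs" "set xs \<subseteq> {1..m}" "inSl n lam mu" using gen_nz[OF nz] by auto
  have "rho m n lam (Eunit i k) (gen m n lam xs mu) = Eop m n lam i k (gen m n lam xs mu)"
    using rho_Eunit[OF gen_Mspace] i k by simp
  also have "\<dots> = Zo i (Po k (gen m n lam xs mu))" using i k by (simp add: Eop_def Zg_def Pg_def)
  finally show "rho m n lam (Eunit i k) (gen m n lam xs mu) =
           (\<lambda>d. \<Sum>s<length xs. if xs ! s = k then gen m n lam (xs[s := i]) mu d else 0)"
    using C1[OF xs i k] by simp
next
  fix xs mu l j assume nz: "gen m n lam xs mu \<noteq> (\<lambda>_. 0)" and l: "l \<in> {1..n}" and j: "j \<in> {1..n}"
  have xs: "distinct xs" "set xs \<subseteq> {1..m}" "inSl n lam mu" using gen_nz[OF nz] by auto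
  have "rho m n lam (Eunit (m+l) (m+j)) (gen m n lam xs mu) = Eop m n lam (m+l) (m+j) (gen m n lam xs mu)"
    using rho_Eunit[OF gen_Mspace] l j by simp
  also have "\<dots> = Ze n lam l (Pe n lam j (gen m n lam xs mu))" using l j by (simp add: Eop_def Zg_def Pg_def)
  finally show "rho m n lam (Eunit (m+l) (m+j)) (gen m n lam xs mu) =
           (\<lambda>d. mu j * gen m n lam xs (shift (shift mu j (-1)) l 1) d)"
    using C2[OF xs l j] by simp
next
  fix xs mu i j assume nz: "gen m n lam xs mu \<noteq> (\<lambda>_. 0)" and i: "i \<in> {1..m}" and j: "j \<in> {1..n}"
  have xs: "distinct xs" "set xs \<subseteq> {1..m}" "inSl n lam mu" using gen_nz[OF nz] by auto
  have "rho m n lam (Eunit i (m+j)) (gen m n lam xs mu) = Eop m n lam i (m+j) (gen m n lam xs mu)"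
    using rho_Eunit[OF gen_Mspace] i j by simp
  also have "\<dots> = Zo i (Pe n lam j (gen m n lam xs mu))" using i j by (simp add: Eop_def Zg_def Pg_def)
  finally show "rho m n lam (Eunit i (m+j)) (gen m n lam xs mu) =
           (\<lambda>d. (-1) ^ length xs * mu j * gen m n lam (i # xs) (shift mu j (-1)) d)"
    using C3[OF xs i j] by simp
next
  fix xs mu i j assume nz: "gen m n lam xs mu \<noteq> (\<lambda>_. 0)" and i: "i \<in> {1..m}" and j: "j \<in> {1..n}"
  have xs: "distinct xs" "set xs \<subseteq> {1..m}" "inSl n lam mu" using gen_nz[OF nz] by auto
  have "rho m n lam (Eunit (m+j) i) (gen m n lam xs mu) = Eop m n lam (m+j) i (gen m n lam xs mu)"
    using rho_Eunit[OF gen_Mspace] i j by simp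
  also have "\<dots> = Ze n lam j (Po i (gen m n lam xs mu))" using i j by (simp add: Eop_def Zg_def Pg_def)
  also have "\<dots> = (\<lambda>d. \<Sum>p<length xs. if xs ! p = i then
               (-1) ^ (length xs - Suc p) * gen m n lam (take p xs @ drop (Suc p) xs) (shift mu j 1) d
             else 0)"
    using C4[OF xs i j] by simp
  also have "\<dots> = (if i \<notin> set xs then (\<lambda>_. 0) else
            (\<lambda>d. \<Sum>p<length xs. if xs ! p = i then
               (-1) ^ (length xs - Suc p) * gen m n lam (take p xs @ drop (Suc p) xs) (shift mu j 1) d
             else 0))"
    by (auto simp: sum_none)
  finally show "rho m n lam (Eunit (m+j) i) (gen m n lam xs mu) =
           (if i \<notin> set xs then (\<lambda>_. 0) else
            (\<lambda>d. \<Sum>p<length xs. if xs ! p = i then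
               (-1) ^ (length xs - Suc p) * gen m n lam (take p xs @ drop (Suc p) xs) (shift mu j 1) d
             else 0))" .
qed

end
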